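(* In the Nakagami model with parameters $L_c>0$, $L_s>0$, the distortion exponent achievable by separate source and channel coding with rates scaling as $R_c=\frac{r_c}{2}\log_2\rho$, $R_s=\frac{r_s}{2}\log_2\rho$, $$\Delta_s(L_s,L_c):=\sup_{r_c>0,\ r_s\ge0}\ \lim_{\rho\to\infty}-\frac{\log ED_s\big(\tfrac{r_s}{2}\log_2\rho,\tfrac{r_c}{2}\log_2\rho\big)}{\log\rho},$$ equals $$\Delta_s(L_s,L_c)=\begin{cases}1-\dfrac{(1-L_s)^2}{L_c+1-L_s}&\text{if }L_s\le1,\\[2mm] \dfrac{L_s(2L_c+1)-L_c-1}{L_s(L_c+1)-1}&\text{if }L_s>1.\end{cases}$$
   Context: Nakagami model: for SNR $\rho>0$, the channel gain is $H=\rho H_0$ and the side-information gain is $\Gamma=\rho\Gamma_0$, where $H_0,\Gamma_0$ are independent, $H_0$ is Gamma distributed with shape $L_c$ and scale $1/L_c$, and $\Gamma_0$ is Gamma distributed with shape $L_s$ and scale $1/L_s$ (Gamma$(L,\theta)$ density $\frac{1}{\theta^L\Gamma(L)}x^{L-1}e^{-x/\theta}$, $x\ge0$). Logarithms base 2 unless ratios of logs. Define $D_d(R,\gamma)=(\gamma+2^{2R})^{-1}$. For $R_s\ge0,R_c>0$, the SSCC outage set is $\mathcal O_s=\{(h,\gamma): R_c\ge\tfrac12\log_2(1+h)\}\cup\{(h,\gamma): R_c\le \tfrac12\log_2(1+\tfrac{2^{2(R_s+R_c)}-1}{1+\gamma})\}$ and $ED_s(R_s,R_c)=\mathrm E[D_d(R_s+R_c,\Gamma)\mathbf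 1\{(H,\Gamma)\notin\mathcal O_s\}]+\mathrm E[D_d(0,\Gamma)\mathbf 1\{(H,\Gamma)\in\mathcal O_s\}]$ (a function of $\rho$ through $H,\Gamma$). *)

theory Defs
  imports "HOL-Analysis.Analysis"
begin

definition gamma_density :: "real \<Rightarrow> real \<Rightarrow> real \<Rightarrow> real" where
  "gamma_density L \<theta> x =
     (if 0 \<le> x then x powr (L - 1) * exp (- x / \<theta>) / (\<theta> powr L * Gamma L) else 0)"

definition gamma_dist :: "real \<Rightarrow> real \<Rightarrow> real measure" where
  "gamma_dist L \<theta> = density lborel (\<lambda>x. ennreal (gamma_density L \<theta> x))"

text \<open>Joint law of (H0, Gamma0): independent, H0 ~ Gamma(Lc, 1/Lc), Gamma0 ~ Gamma(Ls, 1/Ls).\<close>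
definition nakagami_law :: "real \<Rightarrow> real \<Rightarrow> (real \<times> real) measure" where
  "nakagami_law Lc Ls = gamma_dist Lc (1 / Lc) \<Otimes>\<^sub>M gamma_dist Ls (1 / Ls)"

definition D_d :: "real \<Rightarrow> real \<Rightarrow> real" where
  "D_d R \<gamma> = 1 / (\<gamma> + 2 powr (2 * R))"

definition outage_s :: "real \<Rightarrow> real \<Rightarrow> (real \<times> real) set" where
  "outage_s Rs Rc =
     {(h, \<gamma>). Rc \<ge> (1/2) * log 2 (1 + h)} \<union>
     {(h, \<gamma>). Rc \<le> (1/2) * log 2 (1 + (2 powr (2 * (Rs + Rc)) - 1) / (1 + \<gamma>))}"

definition ED_s :: "real \<Rightarrow> real \<Rightarrow> real \<Rightarrow> real \<Rightarrow> real \<Rightarrow> real" where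
  "ED_s Lc Ls \<rho> Rs Rc =
     (\<integral>p. (let h = \<rho> * fst p; \<gamma> = \<rho> * snd p in
             D_d (Rs + Rc) \<gamma> * indicator (- outage_s Rs Rc) (h, \<gamma>)
           + D_d 0 \<gamma> * indicator (outage_s Rs Rc) (h, \<gamma>))
      \<partial>nakagami_law Lc Ls)"

definition Delta_s :: "real \<Rightarrow> real \<Rightarrow> real" where
  "Delta_s Ls Lc = Sup {l. \<exists>rc rs. rc > 0 \<and> rs \<ge> 0 \<and>
      ((\<lambda>\<rho>. - ln (ED_s Lc Ls \<rho> (rs / 2 * log 2 \<rho>) (rc / 2 * log 2 \<rho>)) / ln \<rho>)
        \<longlongrightarrow> l) at_top}"

end

theory Submission
  imports Defs
begin


definition KK :: "real \<Rightarrow> real" where "KK L = L powr L / Gamma L"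

lemma KK_pos: "L > 0 \<Longrightarrow> KK L > 0"
  unfolding KK_def using Gamma_real_pos by auto

lemma dens_eq:
  assumes "L > 0"
  shows "gamma_density L (1/L) x = (if 0 < x then KK L * x powr (L-1) * exp (- (L*x)) else 0)"
  using assms unfolding gamma_density_def KK_def
  by (auto simp: powr_divide field_simps)

lemma dens_meas[measurable]: "(\<lambda>x. gamma_density L t x) \<in> borel_measurable borel"
  unfolding gamma_density_def by measurable

lemma gamma_nn_int:
  assumes s: "s > 0" and L: "L > 0"
  shows "(\<integral>\<^sup>+x. ennreal (indicator {0..} x * x powr (s-1) * exp (- (L*x))) \<partial>lborel) = ennreal (Gamma s / L powr s)"
proof -
  define f where "f = (\<lambda>t::real. ennreal (indicator {0..} t * t powr (s - 1) / exp t))"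
  have fm: "f \<in> borel_measurable borel" unfolding f_def by measurable
  have "ennreal (Gamma s) = (\<integral>\<^sup>+x. f x \<partial>lborel)"
    unfolding f_def using Gamma_conv_nn_integral_real[OF s] by simp
  also have "\<dots> = \<bar>L\<bar> * (\<integral>\<^sup>+x. f (0 + L * x) \<partial>lborel)"
    using nn_integral_real_affine[OF fm, of L 0] L by simp
  also have "(\<lambda>x. f (0 + L * x)) = (\<lambda>x. ennreal (L powr (s-1)) * ennreal (indicator {0..} x * x powr (s-1) * exp (- (L*x))))"
  proof
    fix x
    show "f (0 + L * x) = ennreal (L powr (s-1)) * ennreal (indicator {0..} x * x powr (s-1) * exp (- (L*x)))"
      using L unfolding f_def
      by (cases "x \<ge> 0") (auto simp: indicator_def powr_mult exp_minus field_simps ennreal_mult'[symmetric] zero_le_mult_iff)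
  qed
  also have "(\<integral>\<^sup>+x. ennreal (L powr (s-1)) * ennreal (indicator {0..} x * x powr (s-1) * exp (- (L*x))) \<partial>lborel)
     = ennreal (L powr (s-1)) * (\<integral>\<^sup>+x. ennreal (indicator {0..} x * x powr (s-1) * exp (- (L*x))) \<partial>lborel)"
    by (rule nn_integral_cmult) measurable
  finally have "ennreal (Gamma s) = ennreal (L * L powr (s-1)) * (\<integral>\<^sup>+x. ennreal (indicator {0..} x * x powr (s-1) * exp (- (L*x))) \<partial>lborel)"
    using L by (simp add: ennreal_mult' mult.assoc)
  moreover have "L * L powr (s-1) = L powr s" using L by (simp add: powr_diff)
  ultimately have "ennreal (Gamma s) = ennreal (L powr s) * (\<integral>\<^sup>+x. ennreal (indicator {0..} x * x powr (s-1) * exp (- (L*x))) \<partial>lborel)" by simp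
  then have "ennreal (1 / L powr s) * ennreal (Gamma s) = ennreal (1 / L powr s) * ennreal (L powr s) * (\<integral>\<^sup>+x. ennreal (indicator {0..} x * x powr (s-1) * exp (- (L*x))) \<partial>lborel)"
    by (simp add: mult.assoc)
  also have "ennreal (1 / L powr s) * ennreal (L powr s) = 1"
    using L by (simp add: ennreal_mult'[symmetric])
  finally show ?thesis using L Gamma_real_pos[OF s] by (simp add: ennreal_mult'[symmetric])
qed



lemma dens_nonneg: "L > 0 \<Longrightarrow> gamma_density L (1/L) x \<ge> 0"
  by (simp add: dens_eq KK_pos less_imp_le)

lemma dens_indicator:
  assumes "L > 0"
  shows "ennreal (gamma_density L (1/L) x) = ennreal (KK L) * ennreal (indicator {0..} x * x powr (L-1) * exp (- (L*x)))"
  using assms KK_pos[OF assms] by (cases "x > 0") (auto simp: dens_eq ennreal_mult'[symmetric] indicator_def)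

lemma gamma_total:
  assumes "L > 0"
  shows "(\<integral>\<^sup>+x. ennreal (gamma_density L (1/L) x) \<partial>lborel) = 1"
proof -
  have "(\<integral>\<^sup>+x. ennreal (gamma_density L (1/L) x) \<partial>lborel) =
        (\<integral>\<^sup>+x. ennreal (KK L) * ennreal (indicator {0..} x * x powr (L-1) * exp (- (L*x))) \<partial>lborel)"
    using dens_indicator[OF assms] by simp
  also have "\<dots> = ennreal (KK L) * ennreal (Gamma L / L powr L)"
    by (subst nn_integral_cmult) (auto simp: gamma_nn_int assms)
  also have "\<dots> = 1"
  proof -
    have g: "Gamma L \<noteq> 0" using Gamma_real_pos[OF assms] by simp
    show ?thesis using assms KK_pos[OF assms] g
      by (simp add: ennreal_mult'[symmetric] KK_def)
  qed
  finally show ?thesis .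
qed

lemma gamma_space: "L > 0 \<Longrightarrow> emeasure (gamma_dist L (1/L)) (space (gamma_dist L (1/L))) = 1"
  unfolding gamma_dist_def
  by (simp add: emeasure_density gamma_total)

lemma gamma_finite: "L > 0 \<Longrightarrow> finite_measure (gamma_dist L (1/L))"
  by (rule finite_measureI) (simp add: gamma_space)

lemma gamma_sigma: "L > 0 \<Longrightarrow> sigma_finite_measure (gamma_dist L (1/L))"
  using gamma_finite finite_measure.axioms(1) by blast

definition mneg :: "real \<Rightarrow> real \<Rightarrow> real" where
  "mneg a x = (if 0 < x then x powr (-a) else 0)"

lemma mneg_meas[measurable]: "mneg a \<in> borel_measurable borel"
  unfolding mneg_def by measurable

lemma moment:
  assumes L: "L > 0" and a: "0 \<le> a" "a < L"
  shows "(\<integral>\<^sup>+x. ennreal (mneg a x) \<partial>gamma_dist L (1/L)) = ennreal (KK L * (Gamma (L-a) / L powr (L-a)))"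
proof -
  have "(\<integral>\<^sup>+x. ennreal (mneg a x) \<partial>gamma_dist L (1/L)) =
        (\<integral>\<^sup>+x. ennreal (gamma_density L (1/L) x) * ennreal (mneg a x) \<partial>lborel)"
    unfolding gamma_dist_def by (subst nn_integral_density) auto
  also have "\<dots> = (\<integral>\<^sup>+x. ennreal (KK L) * ennreal (indicator {0..} x * x powr ((L-a)-1) * exp (- (L*x))) \<partial>lborel)"
  proof (rule nn_integral_cong)
    fix x :: real
    show "ennreal (gamma_density L (1/L) x) * ennreal (mneg a x) = ennreal (KK L) * ennreal (indicator {0..} x * x powr ((L-a)-1) * exp (- (L*x)))"
      using L KK_pos[OF L]
      by (cases "x > 0") (auto simp: dens_eq mneg_def ennreal_mult'[symmetric] indicator_def powr_add[symmetric] algebra_simps)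
  qed
  also have "\<dots> = ennreal (KK L) * ennreal (Gamma (L-a) / L powr (L-a))"
    using a by (subst nn_integral_cmult) (auto simp: gamma_nn_int L)
  finally show ?thesis using KK_pos[OF L] by (simp add: ennreal_mult'[symmetric])
qed

lemma cdf_lower:
  assumes L: "L > 0" and b: "0 < b" "b \<le> 1"
  shows "(\<integral>\<^sup>+x. ennreal (indicator {..b} x) \<partial>gamma_dist L (1/L)) \<ge> ennreal (KK L * exp (-L) / L * b powr L)"
proof -
  have hi: "((\<lambda>x. x powr (L-1)) has_integral (b powr (L - 1 + 1) / (L - 1 + 1))) {0..b}"
    using has_integral_powr_from_0[of "L-1" b] L b by simp
  have I: "(\<integral>\<^sup>+x. ennreal (indicator {0..b} x * x powr (L-1)) \<partial>lborel) = ennreal (b powr L / L)"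
    using nn_integral_has_integral_lebesgue[OF _ hi] by simp
  have "ennreal (KK L * exp (-L) / L * b powr L) = ennreal (KK L * exp (-L)) * ennreal (b powr L / L)"
    using L KK_pos[OF L] by (simp add: ennreal_mult'[symmetric])
  also have "\<dots> = (\<integral>\<^sup>+x. ennreal (KK L * exp (-L)) * ennreal (indicator {0..b} x * x powr (L-1)) \<partial>lborel)"
    by (subst nn_integral_cmult) (auto simp: I)
  also have "\<dots> \<le> (\<integral>\<^sup>+x. ennreal (gamma_density L (1/L) x) * ennreal (indicator {..b} x) \<partial>lborel)"
  proof (rule nn_integral_mono)
    fix x :: real
    show "ennreal (KK L * exp (-L)) * ennreal (indicator {0..b} x * x powr (L-1)) \<le> ennreal (gamma_density L (1/L) x) * ennreal (indicator {..b} x)"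
    proof (cases "0 < x \<and> x \<le> b")
      case True
      have "exp (-L) \<le> exp (- (L*x))" using True b L by (simp add: mult_left_le)
      then have "exp (-L) * x powr (L-1) \<le> exp (- (L*x)) * x powr (L-1)"
        by (rule mult_right_mono) simp
      then have "KK L * exp (-L) * x powr (L-1) \<le> KK L * x powr (L-1) * exp (- (L*x))"
        using KK_pos[OF L] by (metis mult.commute mult.left_commute mult_left_mono less_imp_le)
      then show ?thesis using True L KK_pos[OF L]
        by (auto simp: dens_eq ennreal_mult'[symmetric] indicator_def intro!: ennreal_leI)
    next
      case False
      then show ?thesis by (auto simp: indicator_def)
    qed
  qed
  also have "\<dots> = (\<integral>\<^sup>+x. ennreal (indicator {..b} x) \<partial>gamma_dist L (1/L))"
    unfolding gamma_dist_def by (subst nn_integral_density) auto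
  finally show ?thesis .
qed



lemma sets_gamma[simp]: "sets (gamma_dist L t) = sets borel"
  unfolding gamma_dist_def by simp

lemma space_gamma[simp]: "space (gamma_dist L t) = UNIV"
  unfolding gamma_dist_def by simp

lemma meas_gamma: "g \<in> borel_measurable borel \<Longrightarrow> g \<in> borel_measurable (gamma_dist L t)"
proof -
  have eq: "borel_measurable (gamma_dist L t) = borel_measurable borel"
    by (rule measurable_cong_sets) simp_all
  assume "g \<in> borel_measurable borel" then show ?thesis by (simp only: eq)
qed

lemma sets_nak[simp]: "sets (nakagami_law Lc Ls) = sets (borel \<Otimes>\<^sub>M borel)"
  unfolding nakagami_law_def by (rule sets_pair_measure_cong) simp_all

lemma space_nak[simp]: "space (nakagami_law Lc Ls) = UNIV"
  unfolding nakagami_law_def by (simp add: space_pair_measure)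
lemma meas_pair: "f \<in> borel_measurable (borel \<Otimes>\<^sub>M borel) \<Longrightarrow> f \<in> borel_measurable (gamma_dist a b \<Otimes>\<^sub>M gamma_dist c d)"
proof -
  have eq: "borel_measurable (gamma_dist a b \<Otimes>\<^sub>M gamma_dist c d) = borel_measurable (borel \<Otimes>\<^sub>M borel)"
    by (rule measurable_cong_sets, rule sets_pair_measure_cong) simp_all
  assume "f \<in> borel_measurable (borel \<Otimes>\<^sub>M borel)" then show ?thesis by (simp only: eq)
qed

lemma meas_nak: "f \<in> borel_measurable (borel \<Otimes>\<^sub>M borel) \<Longrightarrow> f \<in> borel_measurable (nakagami_law Lc Ls)"
  unfolding nakagami_law_def by (rule meas_pair)

lemma nak_prod:
  assumes Lc: "Lc > 0" and Ls: "Ls > 0"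
  and g[measurable]: "g \<in> borel_measurable borel" and h[measurable]: "h \<in> borel_measurable borel"
  shows "(\<integral>\<^sup>+p. g (fst p) * h (snd p) \<partial>nakagami_law Lc Ls) =
     (\<integral>\<^sup>+x. g x \<partial>gamma_dist Lc (1/Lc)) * (\<integral>\<^sup>+y. h y \<partial>gamma_dist Ls (1/Ls))"
proof -
  interpret S: sigma_finite_measure "gamma_dist Ls (1/Ls)" using gamma_sigma Ls by blast
  have "(\<integral>\<^sup>+p. g (fst p) * h (snd p) \<partial>nakagami_law Lc Ls) =
     (\<integral>\<^sup>+x. \<integral>\<^sup>+y. g x * h y \<partial>gamma_dist Ls (1/Ls) \<partial>gamma_dist Lc (1/Lc))"
    unfolding nakagami_law_def by (subst S.nn_integral_fst[symmetric]) (auto intro!: meas_pair)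
  also have "\<dots> = (\<integral>\<^sup>+x. g x * (\<integral>\<^sup>+y. h y \<partial>gamma_dist Ls (1/Ls)) \<partial>gamma_dist Lc (1/Lc))"
    by (intro nn_integral_cong nn_integral_cmult meas_gamma) simp
  also have "\<dots> = (\<integral>\<^sup>+x. g x \<partial>gamma_dist Lc (1/Lc)) * (\<integral>\<^sup>+y. h y \<partial>gamma_dist Ls (1/Ls))"
    by (intro nn_integral_multc meas_gamma) simp
  finally show ?thesis .
qed

lemma gamma_one: "L > 0 \<Longrightarrow> (\<integral>\<^sup>+x. 1 \<partial>gamma_dist L (1/L)) = 1"
  using gamma_space by simp

lemma nak_fst:
  assumes Lc: "Lc > 0" and Ls: "Ls > 0" and g[measurable]: "g \<in> borel_measurable borel"
  shows "(\<integral>\<^sup>+p. g (fst p) \<partial>nakagami_law Lc Ls) = (\<integral>\<^sup>+x. g x \<partial>gamma_dist Lc (1/Lc))"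
  using nak_prod[OF Lc Ls g, of "\<lambda>_. 1"] gamma_one[OF Ls] by simp

lemma nak_snd:
  assumes Lc: "Lc > 0" and Ls: "Ls > 0" and h[measurable]: "h \<in> borel_measurable borel"
  shows "(\<integral>\<^sup>+p. h (snd p) \<partial>nakagami_law Lc Ls) = (\<integral>\<^sup>+x. h x \<partial>gamma_dist Ls (1/Ls))"
  using nak_prod[OF Lc Ls _ h, of "\<lambda>_. 1"] gamma_one[OF Lc] by simp

lemma nak_one: "Lc > 0 \<Longrightarrow> Ls > 0 \<Longrightarrow> (\<integral>\<^sup>+p. 1 \<partial>nakagami_law Lc Ls) = 1"
  using nak_fst[of Lc Ls "\<lambda>_. 1"] gamma_one by simp

lemma AE_gamma_pos: "L > 0 \<Longrightarrow> AE x in gamma_dist L (1/L). 0 < x"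
  unfolding gamma_dist_def
  by (subst AE_density) (auto simp: dens_eq)

lemma AE_nak_pos:
  assumes Lc: "Lc > 0" and Ls: "Ls > 0"
  shows "AE p in nakagami_law Lc Ls. 0 < fst p \<and> 0 < snd p"
proof -
  interpret P: pair_sigma_finite "gamma_dist Lc (1/Lc)" "gamma_dist Ls (1/Ls)"
    unfolding pair_sigma_finite_def using gamma_sigma Lc Ls by blast
  show ?thesis unfolding nakagami_law_def
  proof (rule P.AE_pair_measure)
    show "{x \<in> space (gamma_dist Lc (1/Lc) \<Otimes>\<^sub>M gamma_dist Ls (1/Ls)). 0 < fst x \<and> 0 < snd x} \<in> sets (gamma_dist Lc (1/Lc) \<Otimes>\<^sub>M gamma_dist Ls (1/Ls))"
    proof -
      have se: "sets (gamma_dist Lc (1/Lc) \<Otimes>\<^sub>M gamma_dist Ls (1/Ls)) = sets (borel \<Otimes>\<^sub>M borel)"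
        by (rule sets_pair_measure_cong) simp_all
      have "{x \<in> space (borel \<Otimes>\<^sub>M borel). 0 < fst (x::real\<times>real) \<and> 0 < snd x} \<in> sets (borel \<Otimes>\<^sub>M borel)" by measurable
      then show ?thesis by (simp add: se space_pair_measure)
    qed
    show "AE x in gamma_dist Lc (1 / Lc). AE y in gamma_dist Ls (1 / Ls). 0 < fst (x, y) \<and> 0 < snd (x, y)"
      using AE_gamma_pos[OF Lc] AE_gamma_pos[OF Ls] by (auto elim!: AE_mp)
  qed
qed



definition Gf :: "real \<Rightarrow> real \<Rightarrow> real \<Rightarrow> real \<Rightarrow> real \<Rightarrow> real" where
  "Gf \<rho> rs rc x y = (if 1 + \<rho>*x \<le> \<rho> powr rc \<or> \<rho> powr rc \<le> 1 + (\<rho> powr (rs+rc) - 1)/(1+\<rho>*y)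
     then 1/(\<rho>*y+1) else 1/(\<rho>*y + \<rho> powr (rs+rc)))"

definition Fint :: "real \<Rightarrow> real \<Rightarrow> real \<Rightarrow> real \<times> real \<Rightarrow> real" where
  "Fint \<rho> Rs Rc p = (let h = \<rho> * fst p; \<gamma> = \<rho> * snd p in
             D_d (Rs + Rc) \<gamma> * indicator (- outage_s Rs Rc) (h, \<gamma>)
           + D_d 0 \<gamma> * indicator (outage_s Rs Rc) (h, \<gamma>))"

lemma ED_Fint: "ED_s Lc Ls \<rho> Rs Rc = (\<integral>p. Fint \<rho> Rs Rc p \<partial>nakagami_law Lc Ls)"
  unfolding ED_s_def Fint_def ..

lemma Fint_alt: "Fint \<rho> Rs Rc p =
   (if Rc \<ge> (1/2) * log 2 (1 + \<rho> * fst p) \<or> Rc \<le> (1/2) * log 2 (1 + (2 powr (2 * (Rs + Rc)) - 1) / (1 + \<rho> * snd p))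
    then 1 / (\<rho> * snd p + 2 powr (2 * 0)) else 1 / (\<rho> * snd p + 2 powr (2 * (Rs + Rc))))"
  unfolding Fint_def D_d_def outage_s_def Let_def indicator_def by auto

lemma Fint_meas: "Fint \<rho> Rs Rc \<in> borel_measurable (nakagami_law Lc Ls)"
proof (rule meas_nak)
  show "Fint \<rho> Rs Rc \<in> borel_measurable (borel \<Otimes>\<^sub>M borel)"
    unfolding Fint_alt[abs_def] by measurable
qed

lemma logcmp:
  assumes "\<rho> > 0" "z > 0"
  shows "((1/2) * log 2 z \<le> c/2 * log 2 \<rho>) \<longleftrightarrow> z \<le> \<rho> powr c"
proof -
  have "c/2 * log 2 \<rho> = (1/2) * log 2 (\<rho> powr c)" using assms by (simp add: log_powr)
  then show ?thesis using assms by simp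
qed

lemma logcmp2:
  assumes "\<rho> > 0" "z > 0"
  shows "(c/2 * log 2 \<rho> \<le> (1/2) * log 2 z) \<longleftrightarrow> \<rho> powr c \<le> z"
proof -
  have "c/2 * log 2 \<rho> = (1/2) * log 2 (\<rho> powr c)" using assms by (simp add: log_powr)
  then show ?thesis using assms by simp
qed

lemma pow2_eq:
  assumes "\<rho> > 0"
  shows "2 powr (2 * (rs/2 * log 2 \<rho> + rc/2 * log 2 \<rho>)) = \<rho> powr (rs + rc)"
proof -
  have "2 * (rs/2 * log 2 \<rho> + rc/2 * log 2 \<rho>) = log 2 \<rho> * (rs + rc)" by (simp add: algebra_simps)
  then have "2 powr (2 * (rs/2 * log 2 \<rho> + rc/2 * log 2 \<rho>)) = (2 powr log 2 \<rho>) powr (rs+rc)"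
    by (simp add: powr_powr)
  then show ?thesis using assms by simp
qed

lemma Fint_Gf:
  assumes \<rho>: "\<rho> > 1" and rc: "rc > 0" and rs: "rs \<ge> 0" and x: "x > 0" and y: "y > 0"
  shows "Fint \<rho> (rs/2 * log 2 \<rho>) (rc/2 * log 2 \<rho>) (x, y) = Gf \<rho> rs rc x y"
proof -
  have p: "2 powr (2 * (rs/2 * log 2 \<rho> + rc/2 * log 2 \<rho>)) = \<rho> powr (rs + rc)"
    using pow2_eq \<rho> by simp
  have s1: "\<rho> powr (rs+rc) \<ge> 1" using \<rho> rs rc by (simp add: ge_one_powr_ge_zero)
  have pos: "0 < 1 + (\<rho> powr (rs+rc) - 1) / (1 + \<rho> * y)"
    using s1 \<rho> y by (simp add: add_pos_nonneg)
  have c1: "((1/2) * log 2 (1 + \<rho> * x) \<le> rc/2 * log 2 \<rho>) \<longleftrightarrow> 1 + \<rho> * x \<le> \<rho> powr rc"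
  proof -
    have "0 < 1 + \<rho>*x" using \<rho> x by (simp add: add_pos_pos)
    then show ?thesis using logcmp[of \<rho> "1 + \<rho>*x" rc] \<rho> by simp
  qed
  have c2: "(rc/2 * log 2 \<rho> \<le> (1/2) * log 2 (1 + (\<rho> powr (rs+rc) - 1) / (1 + \<rho> * y))) \<longleftrightarrow>
       \<rho> powr rc \<le> 1 + (\<rho> powr (rs+rc) - 1) / (1 + \<rho> * y)"
    using logcmp2[OF _ pos, of \<rho> rc] \<rho> by simp
  show ?thesis unfolding Fint_alt Gf_def fst_conv snd_conv p using c1 c2 by simp
qed

lemma Gf_bounds:
  assumes \<rho>: "\<rho> > 1" and rc: "rc > 0" and rs: "rs \<ge> 0" and y: "y > 0"
  shows "0 \<le> Gf \<rho> rs rc x y" "Gf \<rho> rs rc x y \<le> 1" "1/(\<rho>*y + \<rho> powr (rs+rc)) \<le> Gf \<rho> rs rc x y"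
proof -
  have s1: "\<rho> powr (rs+rc) \<ge> 1" using \<rho> rs rc by (simp add: ge_one_powr_ge_zero)
  have a: "0 < \<rho>*y" using \<rho> y by simp
  show "0 \<le> Gf \<rho> rs rc x y" using a s1 unfolding Gf_def by auto
  show "Gf \<rho> rs rc x y \<le> 1" using a s1 unfolding Gf_def by auto
  show "1/(\<rho>*y + \<rho> powr (rs+rc)) \<le> Gf \<rho> rs rc x y" using a s1 unfolding Gf_def
    by (auto intro!: divide_left_mono)
qed

lemma Gf_meas[measurable]: "(\<lambda>p. Gf \<rho> rs rc (fst p) (snd p)) \<in> borel_measurable (borel \<Otimes>\<^sub>M borel)"
  unfolding Gf_def by measurable

lemma ED_eq:
  assumes Lc: "Lc > 0" and Ls: "Ls > 0" and \<rho>: "\<rho> > 1" and rc: "rc > 0" and rs: "rs \<ge> 0"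
  shows "ED_s Lc Ls \<rho> (rs/2 * log 2 \<rho>) (rc/2 * log 2 \<rho>) =
     enn2real (\<integral>\<^sup>+p. ennreal (Gf \<rho> rs rc (fst p) (snd p)) \<partial>nakagami_law Lc Ls)"
proof -
  let ?F = "Fint \<rho> (rs/2 * log 2 \<rho>) (rc/2 * log 2 \<rho>)"
  have pt: "\<And>p. 0 < fst p \<Longrightarrow> 0 < snd p \<Longrightarrow> ?F p = Gf \<rho> rs rc (fst p) (snd p)"
    using Fint_Gf[OF \<rho> rc rs] by (metis prod.collapse)
  have ae: "AE p in nakagami_law Lc Ls. ?F p = Gf \<rho> rs rc (fst p) (snd p)"
    using AE_nak_pos[OF Lc Ls] by (rule AE_mp) (rule AE_I2, rule impI, rule pt, simp_all)
  have ae2: "AE p in nakagami_law Lc Ls. 0 \<le> ?F p"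
    using AE_nak_pos[OF Lc Ls]
  proof (rule AE_mp, intro AE_I2 impI)
    fix p :: "real \<times> real" assume "0 < fst p \<and> 0 < snd p"
    then show "0 \<le> ?F p" using pt[of p] Gf_bounds(1)[OF \<rho> rc rs, of "snd p" "fst p"] by simp
  qed
  have "ED_s Lc Ls \<rho> (rs/2 * log 2 \<rho>) (rc/2 * log 2 \<rho>) = enn2real (\<integral>\<^sup>+p. ennreal (?F p) \<partial>nakagami_law Lc Ls)"
    unfolding ED_Fint by (rule integral_eq_nn_integral[OF Fint_meas ae2])
  also have "(\<integral>\<^sup>+p. ennreal (?F p) \<partial>nakagami_law Lc Ls) = (\<integral>\<^sup>+p. ennreal (Gf \<rho> rs rc (fst p) (snd p)) \<partial>nakagami_law Lc Ls)"
    by (rule nn_integral_cong_AE, rule AE_mp[OF ae], rule AE_I2) simp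
  finally show ?thesis .
qed



definition EDr :: "real \<Rightarrow> real \<Rightarrow> real \<Rightarrow> real \<Rightarrow> real \<Rightarrow> real" where
  "EDr Lc Ls rs rc \<rho> = ED_s Lc Ls \<rho> (rs/2 * log 2 \<rho>) (rc/2 * log 2 \<rho>)"

definition IG :: "real \<Rightarrow> real \<Rightarrow> real \<Rightarrow> real \<Rightarrow> real \<Rightarrow> ennreal" where
  "IG Lc Ls rs rc \<rho> = (\<integral>\<^sup>+p. ennreal (Gf \<rho> rs rc (fst p) (snd p)) \<partial>nakagami_law Lc Ls)"

lemma IG_le1:
  assumes Lc: "Lc > 0" and Ls: "Ls > 0" and \<rho>: "\<rho> > 1" and rc: "rc > 0" and rs: "rs \<ge> 0"
  shows "IG Lc Ls rs rc \<rho> \<le> 1"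
proof -
  have "IG Lc Ls rs rc \<rho> \<le> (\<integral>\<^sup>+p. 1 \<partial>nakagami_law Lc Ls)"
    unfolding IG_def
  proof (rule nn_integral_mono_AE, rule AE_mp[OF AE_nak_pos[OF Lc Ls]], intro AE_I2 impI)
    fix p :: "real\<times>real" assume "0 < fst p \<and> 0 < snd p"
    then show "ennreal (Gf \<rho> rs rc (fst p) (snd p)) \<le> 1"
      using Gf_bounds(2)[OF \<rho> rc rs, of "snd p" "fst p"] by simp
  qed
  then show ?thesis using nak_one[OF Lc Ls] by simp
qed

lemma ED_lower:
  assumes Lc: "Lc > 0" and Ls: "Ls > 0" and \<rho>: "\<rho> > 1" and rc: "rc > 0" and rs: "rs \<ge> 0"
    and v: "v \<ge> 0" and le: "ennreal v \<le> IG Lc Ls rs rc \<rho>"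
  shows "v \<le> EDr Lc Ls rs rc \<rho>"
proof -
  have "enn2real (ennreal v) \<le> enn2real (IG Lc Ls rs rc \<rho>)"
  proof (rule enn2real_mono[OF le])
    have "IG Lc Ls rs rc \<rho> \<le> ennreal 1" using IG_le1[OF Lc Ls \<rho> rc rs] by simp
    then show "IG Lc Ls rs rc \<rho> < top" using ennreal_less_top le_less_trans by blast
  qed
  then show ?thesis using v ED_eq[OF Lc Ls \<rho> rc rs] unfolding EDr_def IG_def by simp
qed

lemma ED_upper:
  assumes Lc: "Lc > 0" and Ls: "Ls > 0" and \<rho>: "\<rho> > 1" and rc: "rc > 0" and rs: "rs \<ge> 0"
    and v: "v \<ge> 0" and le: "IG Lc Ls rs rc \<rho> \<le> ennreal v"
  shows "EDr Lc Ls rs rc \<rho> \<le> v"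
proof -
  have "enn2real (IG Lc Ls rs rc \<rho>) \<le> enn2real (ennreal v)"
    using le by (intro enn2real_mono) auto
  then show ?thesis using v ED_eq[OF Lc Ls \<rho> rc rs] unfolding EDr_def IG_def by simp
qed

lemma IG_lower_pt:
  assumes Lc: "Lc > 0" and Ls: "Ls > 0"
    and pt: "\<And>x y. 0 < x \<Longrightarrow> 0 < y \<Longrightarrow> f x y \<le> Gf \<rho> rs rc x y"
  shows "(\<integral>\<^sup>+p. ennreal (f (fst p) (snd p)) \<partial>nakagami_law Lc Ls) \<le> IG Lc Ls rs rc \<rho>"
  unfolding IG_def
proof (rule nn_integral_mono_AE, rule AE_mp[OF AE_nak_pos[OF Lc Ls]], intro AE_I2 impI)
  fix p :: "real\<times>real" assume "0 < fst p \<and> 0 < snd p"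
  then show "ennreal (f (fst p) (snd p)) \<le> ennreal (Gf \<rho> rs rc (fst p) (snd p))"
    using pt by (auto intro!: ennreal_leI)
qed

lemma IG_upper_pt:
  assumes Lc: "Lc > 0" and Ls: "Ls > 0"
    and pt: "\<And>x y. 0 < x \<Longrightarrow> 0 < y \<Longrightarrow> Gf \<rho> rs rc x y \<le> f x y"
  shows "IG Lc Ls rs rc \<rho> \<le> (\<integral>\<^sup>+p. ennreal (f (fst p) (snd p)) \<partial>nakagami_law Lc Ls)"
  unfolding IG_def
proof (rule nn_integral_mono_AE, rule AE_mp[OF AE_nak_pos[OF Lc Ls]], intro AE_I2 impI)
  fix p :: "real\<times>real" assume "0 < fst p \<and> 0 < snd p"
  then show "ennreal (Gf \<rho> rs rc (fst p) (snd p)) \<le> ennreal (f (fst p) (snd p))"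
    using pt by (auto intro!: ennreal_leI)
qed

definition cL :: "real \<Rightarrow> real" where "cL L = KK L * exp (-L) / L"

lemma cL_pos: "L > 0 \<Longrightarrow> cL L > 0"
  unfolding cL_def using KK_pos by simp

lemma prob_le_lower:
  assumes L: "L > 0" and b: "0 < b" "b \<le> 1"
  shows "ennreal (cL L * b powr L) \<le> (\<integral>\<^sup>+x. ennreal (indicator {..b} x) \<partial>gamma_dist L (1/L))"
  using cdf_lower[OF L b] unfolding cL_def by simp

lemma LB_prod:
  assumes Lc: "Lc > 0" and Ls: "Ls > 0" and c: "c \<ge> 0"
    and a: "0 < a" "a \<le> 1" and b: "0 < b" "b \<le> 1"
  shows "ennreal (c * (cL Lc * a powr Lc) * (cL Ls * b powr Ls)) \<le>
     (\<integral>\<^sup>+p. ennreal (c * indicator {..a} (fst p) * indicator {..b} (snd p)) \<partial>nakagami_law Lc Ls)"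
proof -
  have "(\<integral>\<^sup>+p. ennreal (c * indicator {..a} (fst p) * indicator {..b} (snd p)) \<partial>nakagami_law Lc Ls)
     = (\<integral>\<^sup>+p. ennreal (c * indicator {..a} (fst p)) * ennreal (indicator {..b} (snd p)) \<partial>nakagami_law Lc Ls)"
    using c by (intro nn_integral_cong) (simp add: ennreal_mult')
  also have "\<dots> = (\<integral>\<^sup>+x. ennreal (c * indicator {..a} x) \<partial>gamma_dist Lc (1/Lc)) * (\<integral>\<^sup>+y. ennreal (indicator {..b} y) \<partial>gamma_dist Ls (1/Ls))"
    by (rule nak_prod[OF Lc Ls]) measurable
  also have "(\<integral>\<^sup>+x. ennreal (c * indicator {..a} x) \<partial>gamma_dist Lc (1/Lc)) = ennreal c * (\<integral>\<^sup>+x. ennreal (indicator {..a} x) \<partial>gamma_dist Lc (1/Lc))"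
    using c by (subst nn_integral_cmult[symmetric]) (auto intro!: meas_gamma nn_integral_cong simp: ennreal_mult')
  finally have eq: "(\<integral>\<^sup>+p. ennreal (c * indicator {..a} (fst p) * indicator {..b} (snd p)) \<partial>nakagami_law Lc Ls) =
     ennreal c * (\<integral>\<^sup>+x. ennreal (indicator {..a} x) \<partial>gamma_dist Lc (1/Lc)) * (\<integral>\<^sup>+y. ennreal (indicator {..b} y) \<partial>gamma_dist Ls (1/Ls))" .
  have "ennreal (c * (cL Lc * a powr Lc) * (cL Ls * b powr Ls)) = ennreal c * ennreal (cL Lc * a powr Lc) * ennreal (cL Ls * b powr Ls)"
    using c cL_pos[OF Lc] cL_pos[OF Ls] by (simp add: ennreal_mult')
  also have "\<dots> \<le> ennreal c * (\<integral>\<^sup>+x. ennreal (indicator {..a} x) \<partial>gamma_dist Lc (1/Lc)) * (\<integral>\<^sup>+y. ennreal (indicator {..b} y) \<partial>gamma_dist Ls (1/Ls))"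
    by (intro mult_mono prob_le_lower Lc Ls a b) auto
  finally show ?thesis using eq by simp
qed

lemma LB_snd:
  assumes Lc: "Lc > 0" and Ls: "Ls > 0" and c: "c \<ge> 0" and b: "0 < b" "b \<le> 1"
  shows "ennreal (c * (cL Ls * b powr Ls)) \<le>
     (\<integral>\<^sup>+p. ennreal (c * indicator {..b} (snd p)) \<partial>nakagami_law Lc Ls)"
proof -
  have "(\<integral>\<^sup>+p. ennreal (c * indicator {..b} (snd p)) \<partial>nakagami_law Lc Ls) = (\<integral>\<^sup>+y. ennreal (c * indicator {..b} y) \<partial>gamma_dist Ls (1/Ls))"
    by (rule nak_snd[OF Lc Ls]) measurable
  also have "\<dots> = ennreal c * (\<integral>\<^sup>+x. ennreal (indicator {..b} x) \<partial>gamma_dist Ls (1/Ls))"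
    using c by (subst nn_integral_cmult[symmetric]) (auto intro!: meas_gamma nn_integral_cong simp: ennreal_mult')
  finally have eq: "(\<integral>\<^sup>+p. ennreal (c * indicator {..b} (snd p)) \<partial>nakagami_law Lc Ls) = ennreal c * (\<integral>\<^sup>+x. ennreal (indicator {..b} x) \<partial>gamma_dist Ls (1/Ls))" .
  have "ennreal (c * (cL Ls * b powr Ls)) = ennreal c * ennreal (cL Ls * b powr Ls)"
    using c cL_pos[OF Ls] by (simp add: ennreal_mult')
  also have "\<dots> \<le> ennreal c * (\<integral>\<^sup>+x. ennreal (indicator {..b} x) \<partial>gamma_dist Ls (1/Ls))"
    by (intro mult_mono prob_le_lower Ls b) auto
  finally show ?thesis using eq by simp
qed



lemma LB1:
  assumes Lc: "Lc > 0" and Ls: "Ls > 0" and \<rho>: "\<rho> > 1" and rc: "rc > 0" and rs: "rs \<ge> 0"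
    and b: "0 < b" "b \<le> 1"
  shows "cL Ls * b powr Ls / (\<rho> * b + \<rho> powr (rs+rc)) \<le> EDr Lc Ls rs rc \<rho>"
proof -
  have s1: "\<rho> powr (rs+rc) \<ge> 1" using \<rho> rs rc by (simp add: ge_one_powr_ge_zero)
  let ?c = "1 / (\<rho> * b + \<rho> powr (rs+rc))"
  have c: "?c \<ge> 0" using s1 \<rho> b by simp
  have "ennreal (?c * (cL Ls * b powr Ls)) \<le> (\<integral>\<^sup>+p. ennreal (?c * indicator {..b} (snd p)) \<partial>nakagami_law Lc Ls)"
    by (rule LB_snd[OF Lc Ls c b])
  also have "\<dots> \<le> IG Lc Ls rs rc \<rho>"
  proof (rule IG_lower_pt[OF Lc Ls])
    fix x y :: real assume x: "0 < x" and y: "0 < y"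
    show "?c * indicator {..b} y \<le> Gf \<rho> rs rc x y"
    proof (cases "y \<le> b")
      case True
      have "?c \<le> 1 / (\<rho> * y + \<rho> powr (rs+rc))"
        using True \<rho> y s1 by (intro divide_left_mono) (auto intro!: add_pos_pos mult_pos_pos)
      also have "\<dots> \<le> Gf \<rho> rs rc x y" by (rule Gf_bounds(3)[OF \<rho> rc rs y])
      finally show ?thesis using True by simp
    next
      case False then show ?thesis using Gf_bounds(1)[OF \<rho> rc rs y] by simp
    qed
  qed
  finally have "ennreal (?c * (cL Ls * b powr Ls)) \<le> IG Lc Ls rs rc \<rho>" .
  from ED_lower[OF Lc Ls \<rho> rc rs _ this] c cL_pos[OF Ls] show ?thesis by simp
qed

lemma LB2:
  assumes Lc: "Lc > 0" and Ls: "Ls > 0" and \<rho>: "\<rho> > 1" and rc: "rc > 0" and rs: "rs \<ge> 0"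
    and a: "0 < a" "a \<le> 1" and b: "0 < b" "b \<le> 1" and cond: "1 + \<rho> * a \<le> \<rho> powr rc"
  shows "1 / (\<rho> * b + 1) * (cL Lc * a powr Lc) * (cL Ls * b powr Ls) \<le> EDr Lc Ls rs rc \<rho>"
proof -
  let ?c = "1 / (\<rho> * b + 1)"
  have c: "?c \<ge> 0" using \<rho> b by simp
  have "ennreal (?c * (cL Lc * a powr Lc) * (cL Ls * b powr Ls)) \<le> (\<integral>\<^sup>+p. ennreal (?c * indicator {..a} (fst p) * indicator {..b} (snd p)) \<partial>nakagami_law Lc Ls)"
    by (rule LB_prod[OF Lc Ls c a b])
  also have "\<dots> \<le> IG Lc Ls rs rc \<rho>"
  proof (rule IG_lower_pt[OF Lc Ls])
    fix x y :: real assume x: "0 < x" and y: "0 < y"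
    show "?c * indicator {..a} x * indicator {..b} y \<le> Gf \<rho> rs rc x y"
    proof (cases "x \<le> a \<and> y \<le> b")
      case True
      have "1 + \<rho> * x \<le> \<rho> powr rc" using True cond \<rho> by (smt (verit) mult_left_mono)
      then have G: "Gf \<rho> rs rc x y = 1 / (\<rho> * y + 1)" unfolding Gf_def by simp
      have "?c \<le> 1 / (\<rho> * y + 1)"
        using True \<rho> y by (intro divide_left_mono) (auto intro!: add_pos_pos mult_pos_pos)
      then show ?thesis using True G by simp
    next
      case False then show ?thesis using Gf_bounds(1)[OF \<rho> rc rs y] by auto
    qed
  qed
  finally have "ennreal (?c * (cL Lc * a powr Lc) * (cL Ls * b powr Ls)) \<le> IG Lc Ls rs rc \<rho>" .
  from ED_lower[OF Lc Ls \<rho> rc rs _ this] c cL_pos[OF Ls] cL_pos[OF Lc] show ?thesis by simp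
qed

lemma LB3:
  assumes Lc: "Lc > 0" and Ls: "Ls > 0" and \<rho>: "\<rho> > 1" and rc: "rc > 0" and rs: "rs \<ge> 0"
    and b: "0 < b" "b \<le> 1" and cond: "1 + \<rho> * b \<le> \<rho> powr rs"
  shows "1 / (\<rho> * b + 1) * (cL Ls * b powr Ls) \<le> EDr Lc Ls rs rc \<rho>"
proof -
  let ?c = "1 / (\<rho> * b + 1)"
  have c: "?c \<ge> 0" using \<rho> b by simp
  have "ennreal (?c * (cL Ls * b powr Ls)) \<le> (\<integral>\<^sup>+p. ennreal (?c * indicator {..b} (snd p)) \<partial>nakagami_law Lc Ls)"
    by (rule LB_snd[OF Lc Ls c b])
  also have "\<dots> \<le> IG Lc Ls rs rc \<rho>"
  proof (rule IG_lower_pt[OF Lc Ls])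
    fix x y :: real assume x: "0 < x" and y: "0 < y"
    show "?c * indicator {..b} y \<le> Gf \<rho> rs rc x y"
    proof (cases "y \<le> b")
      case True
      define P where "P = \<rho> powr rs"
      define Q where "Q = \<rho> powr rc"
      have PQ: "\<rho> powr (rs+rc) = P * Q" unfolding P_def Q_def by (simp add: powr_add)
      have P1: "P \<ge> 1" unfolding P_def using \<rho> rs by (simp add: ge_one_powr_ge_zero)
      have Q1: "Q \<ge> 1" unfolding Q_def using \<rho> rc by (simp add: ge_one_powr_ge_zero)
      have yP: "1 + \<rho> * y \<le> P" using True cond \<rho> unfolding P_def by (smt (verit) mult_left_mono)
      have d: "1 + \<rho> * y > 0" using \<rho> y by (simp add: add_pos_pos)
      have PQ1: "1 * 1 \<le> P * Q" using P1 Q1 by (intro mult_mono) auto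
      have "(P * Q - 1) / P \<le> (P * Q - 1) / (1 + \<rho> * y)"
        using PQ1 yP d by (intro divide_left_mono) auto
      moreover have "(P * Q - 1) / P = Q - 1 / P" using P1 by (simp add: field_simps)
      moreover have "1 / P \<le> 1" using P1 by simp
      ultimately have "Q \<le> 1 + (\<rho> powr (rs+rc) - 1) / (1 + \<rho> * y)" unfolding PQ by linarith
      then have G: "Gf \<rho> rs rc x y = 1 / (\<rho> * y + 1)" unfolding Gf_def Q_def by simp
      have "?c \<le> 1 / (\<rho> * y + 1)"
        using True \<rho> y by (intro divide_left_mono) (auto intro!: add_pos_pos mult_pos_pos)
      then show ?thesis using True G by simp
    next
      case False then show ?thesis using Gf_bounds(1)[OF \<rho> rc rs y] by auto
    qed
  qed
  finally have "ennreal (?c * (cL Ls * b powr Ls)) \<le> IG Lc Ls rs rc \<rho>" .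
  from ED_lower[OF Lc Ls \<rho> rc rs _ this] c cL_pos[OF Ls] show ?thesis by simp
qed



definition fexp :: "real \<Rightarrow> real \<Rightarrow> real \<Rightarrow> real \<Rightarrow> real \<Rightarrow> real" where
  "fexp Lc Ls rs rc \<rho> = - ln (EDr Lc Ls rs rc \<rho>) / ln \<rho>"

definition LBexp :: "real \<Rightarrow> real \<Rightarrow> real \<Rightarrow> real \<Rightarrow> real \<Rightarrow> bool" where
  "LBexp Lc Ls rs rc e = (\<exists>C>0. eventually (\<lambda>\<rho>. C * \<rho> powr (-e) \<le> EDr Lc Ls rs rc \<rho>) at_top)"

definition UBexp :: "real \<Rightarrow> real \<Rightarrow> real \<Rightarrow> real \<Rightarrow> real \<Rightarrow> bool" where
  "UBexp Lc Ls rs rc e = (\<exists>C>0. eventually (\<lambda>\<rho>. EDr Lc Ls rs rc \<rho> \<le> C * \<rho> powr (-e)) at_top)"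

lemma const_over_ln: "((\<lambda>\<rho>::real. c / ln \<rho>) \<longlongrightarrow> 0) at_top"
  by (rule tendsto_divide_0[OF tendsto_const filterlim_at_top_imp_at_infinity[OF ln_at_top]])

lemma LB_fexp:
  assumes "LBexp Lc Ls rs rc e"
  shows "\<exists>C>0. eventually (\<lambda>\<rho>. fexp Lc Ls rs rc \<rho> \<le> e - ln C / ln \<rho> \<and> 0 < EDr Lc Ls rs rc \<rho>) at_top"
proof -
  obtain C where C: "C > 0" and ev: "eventually (\<lambda>\<rho>. C * \<rho> powr (-e) \<le> EDr Lc Ls rs rc \<rho>) at_top"
    using assms unfolding LBexp_def by blast
  have "eventually (\<lambda>\<rho>. fexp Lc Ls rs rc \<rho> \<le> e - ln C / ln \<rho> \<and> 0 < EDr Lc Ls rs rc \<rho>) at_top"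
    using ev eventually_gt_at_top[of 1]
  proof eventually_elim
    case (elim \<rho>)
    have p: "0 < C * \<rho> powr (-e)" using C elim by simp
    have pos: "0 < EDr Lc Ls rs rc \<rho>" using p elim by linarith
    have "ln (C * \<rho> powr (-e)) \<le> ln (EDr Lc Ls rs rc \<rho>)" using p elim by simp
    then have "ln C - e * ln \<rho> \<le> ln (EDr Lc Ls rs rc \<rho>)" using C elim by (simp add: ln_mult ln_powr)
    moreover have "ln \<rho> > 0" using elim by simp
    ultimately have "- ln (EDr Lc Ls rs rc \<rho>) / ln \<rho> \<le> (e * ln \<rho> - ln C) / ln \<rho>"
      by (intro divide_right_mono) auto
    also have "\<dots> = e - ln C / ln \<rho>" using \<open>ln \<rho> > 0\<close> by (simp add: field_simps)
    finally show ?case unfolding fexp_def using pos by simp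
  qed
  then show ?thesis using C by blast
qed

lemma LB_limit:
  assumes "LBexp Lc Ls rs rc e" and lim: "(fexp Lc Ls rs rc \<longlongrightarrow> l) at_top"
  shows "l \<le> e"
proof -
  obtain C where C: "C > 0" and ev: "eventually (\<lambda>\<rho>. fexp Lc Ls rs rc \<rho> \<le> e - ln C / ln \<rho> \<and> 0 < EDr Lc Ls rs rc \<rho>) at_top"
    using LB_fexp[OF assms(1)] by blast
  have t: "((\<lambda>\<rho>. e - ln C / ln \<rho>) \<longlongrightarrow> e - 0) at_top"
    by (intro tendsto_intros const_over_ln)
  show ?thesis
  proof -
    have "eventually (\<lambda>\<rho>. fexp Lc Ls rs rc \<rho> \<le> e - ln C / ln \<rho>) at_top"
      using ev by (rule eventually_mono) simp
    then show ?thesis using tendsto_le[OF trivial_limit_at_top_linorder t lim] by simp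
  qed
qed

lemma LB_ev:
  assumes "LBexp Lc Ls rs rc e" and "a > e"
  shows "eventually (\<lambda>\<rho>. fexp Lc Ls rs rc \<rho> < a) at_top"
proof -
  obtain C where C: "C > 0" and ev: "eventually (\<lambda>\<rho>. fexp Lc Ls rs rc \<rho> \<le> e - ln C / ln \<rho> \<and> 0 < EDr Lc Ls rs rc \<rho>) at_top"
    using LB_fexp[OF assms(1)] by blast
  have t: "((\<lambda>\<rho>. e - ln C / ln \<rho>) \<longlongrightarrow> e - 0) at_top"
    by (intro tendsto_intros const_over_ln)
  have "eventually (\<lambda>\<rho>. e - ln C / ln \<rho> < a) at_top"
    using order_tendstoD(2)[OF t] assms(2) by simp
  with ev show ?thesis by eventually_elim auto
qed

lemma UB_ev:
  assumes "UBexp Lc Ls rs rc e" and "LBexp Lc Ls rs rc e'" and "a < e"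
  shows "eventually (\<lambda>\<rho>. a < fexp Lc Ls rs rc \<rho>) at_top"
proof -
  obtain C where C: "C > 0" and ev: "eventually (\<lambda>\<rho>. EDr Lc Ls rs rc \<rho> \<le> C * \<rho> powr (-e)) at_top"
    using assms(1) unfolding UBexp_def by blast
  obtain C' where ev': "eventually (\<lambda>\<rho>. fexp Lc Ls rs rc \<rho> \<le> e' - ln C' / ln \<rho> \<and> 0 < EDr Lc Ls rs rc \<rho>) at_top"
    using LB_fexp[OF assms(2)] by blast
  have t: "((\<lambda>\<rho>. e - ln C / ln \<rho>) \<longlongrightarrow> e - 0) at_top"
    by (intro tendsto_intros const_over_ln)
  have ev2: "eventually (\<lambda>\<rho>. a < e - ln C / ln \<rho>) at_top"
    using order_tendstoD(1)[OF t] assms(3) by simp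
  show ?thesis using ev ev' ev2 eventually_gt_at_top[of 1]
  proof eventually_elim
    case (elim \<rho>)
    have pos: "0 < EDr Lc Ls rs rc \<rho>" using elim by simp
    have "ln (EDr Lc Ls rs rc \<rho>) \<le> ln (C * \<rho> powr (-e))" using pos elim by simp
    then have "ln (EDr Lc Ls rs rc \<rho>) \<le> ln C - e * ln \<rho>" using C elim by (simp add: ln_mult ln_powr)
    moreover have "ln \<rho> > 0" using elim by simp
    ultimately have "(e * ln \<rho> - ln C) / ln \<rho> \<le> - ln (EDr Lc Ls rs rc \<rho>) / ln \<rho>"
      by (intro divide_right_mono) auto
    moreover have "(e * ln \<rho> - ln C) / ln \<rho> = e - ln C / ln \<rho>" using \<open>ln \<rho> > 0\<close> by (simp add: field_simps)
    ultimately show ?case unfolding fexp_def using elim by simp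
  qed
qed

lemma LBexp_mono:
  assumes "LBexp Lc Ls rs rc e" "e \<le> e'"
  shows "LBexp Lc Ls rs rc e'"
proof -
  obtain C where C: "C > 0" and ev: "eventually (\<lambda>\<rho>. C * \<rho> powr (-e) \<le> EDr Lc Ls rs rc \<rho>) at_top"
    using assms unfolding LBexp_def by blast
  have "eventually (\<lambda>\<rho>. C * \<rho> powr (-e') \<le> EDr Lc Ls rs rc \<rho>) at_top"
    using ev eventually_ge_at_top[of 1]
  proof eventually_elim
    case (elim \<rho>)
    have "\<rho> powr (-e') \<le> \<rho> powr (-e)" using elim assms(2) by (intro powr_mono) auto
    then have "C * \<rho> powr (-e') \<le> C * \<rho> powr (-e)" using C by simp
    then show ?case using elim by linarith
  qed
  then show ?thesis unfolding LBexp_def using C by blast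
qed

lemma UBexp_mono:
  assumes "UBexp Lc Ls rs rc e" "e' \<le> e"
  shows "UBexp Lc Ls rs rc e'"
proof -
  obtain C where C: "C > 0" and ev: "eventually (\<lambda>\<rho>. EDr Lc Ls rs rc \<rho> \<le> C * \<rho> powr (-e)) at_top"
    using assms unfolding UBexp_def by blast
  have "eventually (\<lambda>\<rho>. EDr Lc Ls rs rc \<rho> \<le> C * \<rho> powr (-e')) at_top"
    using ev eventually_ge_at_top[of 1]
  proof eventually_elim
    case (elim \<rho>)
    have "\<rho> powr (-e) \<le> \<rho> powr (-e')" using elim assms(2) by (intro powr_mono) auto
    then have "C * \<rho> powr (-e) \<le> C * \<rho> powr (-e')" using C by simp
    then show ?case using elim by linarith
  qed
  then show ?thesis unfolding UBexp_def using C by blast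
qed

lemma ev_powr_ge2:
  assumes "r > 0"
  shows "eventually (\<lambda>\<rho>::real. 2 \<le> \<rho> powr r) at_top"
  using eventually_ge_at_top[of "2 powr (1/r)"]
proof eventually_elim
  case (elim \<rho>)
  have "(2 powr (1/r)) powr r \<le> \<rho> powr r" using elim assms by (intro powr_mono2) auto
  then show ?case using assms by (simp add: powr_powr)
qed



lemma pw1: "(\<rho>::real) > 0 \<Longrightarrow> \<rho> * \<rho> powr (a - 1) = \<rho> powr a"
  by (simp add: powr_diff)

lemma pw_le1: "(\<rho>::real) \<ge> 1 \<Longrightarrow> a \<le> 0 \<Longrightarrow> \<rho> powr a \<le> 1"
  using powr_mono[of a 0 \<rho>] by simp

lemma inv_pw: "(\<rho>::real) > 0 \<Longrightarrow> (1/\<rho>) powr L = \<rho> powr (-L)"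
  by (simp add: powr_divide powr_minus_divide)

lemma LBi:
  assumes Lc: "Lc > 0" and Ls: "Ls > 0" and rc: "rc > 0" and rs: "rs \<ge> 0"
  shows "LBexp Lc Ls rs rc (max 1 (rs+rc))"
  unfolding LBexp_def
proof (intro exI conjI)
  let ?m = "max 1 (rs+rc)"
  show "cL Ls / 2 > 0" using cL_pos[OF Ls] by simp
  show "eventually (\<lambda>\<rho>. cL Ls / 2 * \<rho> powr (- ?m) \<le> EDr Lc Ls rs rc \<rho>) at_top"
    using eventually_gt_at_top[of 1]
  proof eventually_elim
    case (elim \<rho>)
    have a: "\<rho> \<le> \<rho> powr ?m" using powr_mono[of 1 ?m \<rho>] elim by simp
    have b: "\<rho> powr (rs+rc) \<le> \<rho> powr ?m" using elim by (intro powr_mono) auto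
    have pos: "0 < \<rho> + \<rho> powr (rs+rc)" using elim by (simp add: add_pos_nonneg)
    have ab: "\<rho> + \<rho> powr (rs+rc) \<le> 2 * \<rho> powr ?m" using a b by linarith
    have "cL Ls / 2 * \<rho> powr (- ?m) = cL Ls / (2 * \<rho> powr ?m)" by (simp add: powr_minus_divide)
    also have "\<dots> \<le> cL Ls / (\<rho> + \<rho> powr (rs+rc))"
      using ab pos cL_pos[OF Ls] elim by (intro divide_left_mono) auto
    also have "\<dots> = cL Ls * 1 powr Ls / (\<rho> * 1 + \<rho> powr (rs+rc))" by simp
    also have "\<dots> \<le> EDr Lc Ls rs rc \<rho>" using LB1[OF Lc Ls elim rc rs, of 1] by simp
    finally show ?case .
  qed
qed

lemma LBii:
  assumes Lc: "Lc > 0" and Ls: "Ls > 0" and rc: "rc > 0" and rs: "rs \<ge> 0" and s: "rs + rc < 1"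
  shows "LBexp Lc Ls rs rc ((rs+rc) + Ls * (1 - (rs+rc)))"
  unfolding LBexp_def
proof (intro exI conjI)
  let ?s = "rs+rc"
  show "cL Ls / 2 > 0" using cL_pos[OF Ls] by simp
  show "eventually (\<lambda>\<rho>. cL Ls / 2 * \<rho> powr (- (?s + Ls * (1 - ?s))) \<le> EDr Lc Ls rs rc \<rho>) at_top"
    using eventually_gt_at_top[of 1]
  proof eventually_elim
    case (elim \<rho>)
    define b where "b = \<rho> powr (?s - 1)"
    have b0: "0 < b" using elim unfolding b_def by simp
    have b1: "b \<le> 1" unfolding b_def using elim s by (intro pw_le1) auto
    have rb: "\<rho> * b = \<rho> powr ?s" unfolding b_def using elim pw1 by simp
    have bL: "b powr Ls = \<rho> powr ((?s - 1) * Ls)" unfolding b_def using elim by (simp add: powr_powr)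
    have "cL Ls / 2 * \<rho> powr (- (?s + Ls * (1 - ?s))) = cL Ls / 2 * (\<rho> powr ((?s - 1) * Ls) / \<rho> powr ?s)"
      by (simp add: powr_diff[symmetric] algebra_simps)
    also have "\<dots> = cL Ls * b powr Ls / (\<rho> * b + \<rho> powr ?s)" unfolding bL rb by simp
    also have "\<dots> \<le> EDr Lc Ls rs rc \<rho>" using LB1[OF Lc Ls elim rc rs b0 b1] by simp
    finally show ?case .
  qed
qed

lemma LBiii:
  assumes Lc: "Lc > 0" and Ls: "Ls > 0" and rc: "rc > 0" and rs: "rs \<ge> 0" and rc1: "rc < 1"
  shows "LBexp Lc Ls rs rc (Lc * (1 - rc) + Ls)"
  unfolding LBexp_def
proof (intro exI conjI)
  let ?C = "cL Lc * cL Ls / (2 * 2 powr Lc)"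
  show "?C > 0" using cL_pos[OF Ls] cL_pos[OF Lc] by simp
  show "eventually (\<lambda>\<rho>. ?C * \<rho> powr (- (Lc * (1 - rc) + Ls)) \<le> EDr Lc Ls rs rc \<rho>) at_top"
    using eventually_gt_at_top[of 1] ev_powr_ge2[OF rc]
  proof eventually_elim
    case (elim \<rho>)
    define a where "a = \<rho> powr (rc - 1) / 2"
    define b where "b = 1 / \<rho>"
    have a0: "0 < a" using elim unfolding a_def by simp
    have a1: "a \<le> 1" unfolding a_def using elim rc1 pw_le1[of \<rho> "rc-1"] by auto
    have b0: "0 < b" "b \<le> 1" using elim unfolding b_def by auto
    have ra: "\<rho> * a = \<rho> powr rc / 2" unfolding a_def using elim pw1[of \<rho> rc] by simp
    have cond: "1 + \<rho> * a \<le> \<rho> powr rc" using ra elim by simp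
    have aL: "a powr Lc = \<rho> powr ((rc - 1) * Lc) / 2 powr Lc" unfolding a_def using elim
      by (simp add: powr_divide powr_powr)
    have bL: "b powr Ls = \<rho> powr (- Ls)" unfolding b_def using elim inv_pw by simp
    have rb: "\<rho> * b + 1 = 2" unfolding b_def using elim by simp
    have "?C * \<rho> powr (- (Lc * (1 - rc) + Ls)) = ?C * (\<rho> powr ((rc - 1) * Lc) * \<rho> powr (- Ls))"
      by (simp add: powr_add[symmetric] algebra_simps)
    also have "\<dots> = 1 / (\<rho> * b + 1) * (cL Lc * a powr Lc) * (cL Ls * b powr Ls)"
      unfolding aL bL rb by (simp add: field_simps)
    also have "\<dots> \<le> EDr Lc Ls rs rc \<rho>" using LB2[OF Lc Ls elim(1) rc rs a0 a1 b0 cond] .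
    finally show ?case .
  qed
qed

lemma LBiv:
  assumes Lc: "Lc > 0" and Ls: "Ls > 0" and rc: "rc > 0" and rs: "rs \<ge> 0" and rc1: "rc < 1"
  shows "LBexp Lc Ls rs rc (Lc * (1 - rc) + 1)"
  unfolding LBexp_def
proof (intro exI conjI)
  let ?C = "cL Lc * cL Ls / (2 * 2 powr Lc)"
  show "?C > 0" using cL_pos[OF Ls] cL_pos[OF Lc] by simp
  show "eventually (\<lambda>\<rho>. ?C * \<rho> powr (- (Lc * (1 - rc) + 1)) \<le> EDr Lc Ls rs rc \<rho>) at_top"
    using eventually_gt_at_top[of 1] ev_powr_ge2[OF rc]
  proof eventually_elim
    case (elim \<rho>)
    define a where "a = \<rho> powr (rc - 1) / 2"
    have a0: "0 < a" using elim unfolding a_def by simp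
    have a1: "a \<le> 1" unfolding a_def using elim rc1 pw_le1[of \<rho> "rc-1"] by auto
    have ra: "\<rho> * a = \<rho> powr rc / 2" unfolding a_def using elim pw1[of \<rho> rc] by simp
    have cond: "1 + \<rho> * a \<le> \<rho> powr rc" using ra elim by simp
    have aL: "a powr Lc = \<rho> powr ((rc - 1) * Lc) / 2 powr Lc" unfolding a_def using elim
      by (simp add: powr_divide powr_powr)
    have K: "0 \<le> cL Lc * a powr Lc * cL Ls" using cL_pos[OF Ls] cL_pos[OF Lc] by simp
    have q: "1 / (2 * \<rho>) \<le> 1 / (\<rho> * 1 + 1)" using elim by (intro divide_left_mono) auto
    have m1: "\<rho> powr (- 1) = 1 / \<rho>" using elim by (simp add: powr_minus_divide)
    define X where "X = \<rho> powr ((rc - 1) * Lc)"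
    have e: "- (Lc * (1 - rc) + 1) = (rc - 1) * Lc + (- 1)" by (simp add: algebra_simps)
    have "?C * \<rho> powr (- (Lc * (1 - rc) + 1)) = ?C * (\<rho> powr ((rc - 1) * Lc) * \<rho> powr (- 1))"
      by (simp only: e powr_add)
    also have "\<dots> = ?C * (X * (1 / \<rho>))" unfolding X_def m1 ..
    also have "\<dots> = 1 / (2 * \<rho>) * (cL Lc * (X / 2 powr Lc) * cL Ls)"
      using elim by (simp add: field_simps)
    also have "\<dots> = 1 / (2 * \<rho>) * (cL Lc * a powr Lc * cL Ls)"
      unfolding aL X_def ..
    also have "\<dots> \<le> 1 / (\<rho> * 1 + 1) * (cL Lc * a powr Lc * cL Ls)"
      by (rule mult_right_mono[OF q K])
    also have "\<dots> = 1 / (\<rho> * 1 + 1) * (cL Lc * a powr Lc) * (cL Ls * 1 powr Ls)" by simp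
    also have "\<dots> \<le> EDr Lc Ls rs rc \<rho>" using LB2[OF Lc Ls elim(1) rc rs a0 a1 _ _ cond, of 1] by simp
    finally show ?case .
  qed
qed



lemma LBv:
  assumes Lc: "Lc > 0" and Ls: "Ls > 0" and rc: "rc \<ge> 1" and rs: "rs \<ge> 0"
  shows "LBexp Lc Ls rs rc Ls"
  unfolding LBexp_def
proof (intro exI conjI)
  let ?C = "cL Lc * (1/2) powr Lc * cL Ls / 2"
  show "?C > 0" using cL_pos[OF Ls] cL_pos[OF Lc] by simp
  show "eventually (\<lambda>\<rho>. ?C * \<rho> powr (- Ls) \<le> EDr Lc Ls rs rc \<rho>) at_top"
    using eventually_ge_at_top[of 2]
  proof eventually_elim
    case (elim \<rho>)
    have r1: "\<rho> > 1" using elim by simp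
    have "\<rho> \<le> \<rho> powr rc" using powr_mono[of 1 rc \<rho>] rc elim by simp
    then have cond: "1 + \<rho> * (1/2) \<le> \<rho> powr rc" using elim by simp
    have bL: "(1/\<rho>) powr Ls = \<rho> powr (- Ls)" using elim inv_pw by simp
    have rb: "\<rho> * (1/\<rho>) + 1 = 2" using elim by simp
    have "?C * \<rho> powr (- Ls) = 1 / (\<rho> * (1/\<rho>) + 1) * (cL Lc * (1/2) powr Lc) * (cL Ls * (1/\<rho>) powr Ls)"
      unfolding bL rb by simp
    also have "\<dots> \<le> EDr Lc Ls rs rc \<rho>"
      using LB2[OF Lc Ls r1 _ rs _ _ _ _ cond, of "1/\<rho>"] rc elim by simp
    finally show ?case .
  qed
qed

lemma LBvi:
  assumes Lc: "Lc > 0" and Ls: "Ls > 0" and rc: "rc \<ge> 1" and rs: "rs \<ge> 0"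
  shows "LBexp Lc Ls rs rc 1"
  unfolding LBexp_def
proof (intro exI conjI)
  let ?C = "cL Lc * (1/2) powr Lc * cL Ls / 2"
  show "?C > 0" using cL_pos[OF Ls] cL_pos[OF Lc] by simp
  show "eventually (\<lambda>\<rho>. ?C * \<rho> powr (- 1) \<le> EDr Lc Ls rs rc \<rho>) at_top"
    using eventually_ge_at_top[of 2]
  proof eventually_elim
    case (elim \<rho>)
    have r1: "\<rho> > 1" using elim by simp
    have "\<rho> \<le> \<rho> powr rc" using powr_mono[of 1 rc \<rho>] rc elim by simp
    then have cond: "1 + \<rho> * (1/2) \<le> \<rho> powr rc" using elim by simp
    have K: "0 \<le> cL Lc * (1/2) powr Lc * cL Ls" using cL_pos[OF Ls] cL_pos[OF Lc] by simp
    have q: "1 / (2 * \<rho>) \<le> 1 / (\<rho> * 1 + 1)" using elim by (intro divide_left_mono) auto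
    have m1: "\<rho> powr (- 1) = 1 / \<rho>" using elim by (simp add: powr_minus_divide)
    have "?C * \<rho> powr (- 1) = 1 / (2 * \<rho>) * (cL Lc * (1/2) powr Lc * cL Ls)"
      unfolding m1 by simp
    also have "\<dots> \<le> 1 / (\<rho> * 1 + 1) * (cL Lc * (1/2) powr Lc * cL Ls)"
      by (rule mult_right_mono[OF q K])
    also have "\<dots> = 1 / (\<rho> * 1 + 1) * (cL Lc * (1/2) powr Lc) * (cL Ls * 1 powr Ls)" by simp
    also have "\<dots> \<le> EDr Lc Ls rs rc \<rho>"
      using LB2[OF Lc Ls r1 _ rs _ _ _ _ cond, of 1] rc elim by simp
    finally show ?case .
  qed
qed

lemma LBvii:
  assumes Lc: "Lc > 0" and Ls: "Ls > 0" and rc: "rc > 0" and rs: "rs > 0"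
  shows "LBexp Lc Ls rs rc Ls"
  unfolding LBexp_def
proof (intro exI conjI)
  let ?C = "cL Ls / 2"
  show "?C > 0" using cL_pos[OF Ls] by simp
  show "eventually (\<lambda>\<rho>. ?C * \<rho> powr (- Ls) \<le> EDr Lc Ls rs rc \<rho>) at_top"
    using eventually_ge_at_top[of 2] ev_powr_ge2[OF rs]
  proof eventually_elim
    case (elim \<rho>)
    have r1: "\<rho> > 1" using elim by simp
    have cond: "1 + \<rho> * (1/\<rho>) \<le> \<rho> powr rs" using elim by simp
    have bL: "(1/\<rho>) powr Ls = \<rho> powr (- Ls)" using elim inv_pw by simp
    have rb: "\<rho> * (1/\<rho>) + 1 = 2" using elim by simp
    have "?C * \<rho> powr (- Ls) = 1 / (\<rho> * (1/\<rho>) + 1) * (cL Ls * (1/\<rho>) powr Ls)"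
      unfolding bL rb by simp
    also have "\<dots> \<le> EDr Lc Ls rs rc \<rho>"
      using LB3[OF Lc Ls r1 rc _ _ _ cond] rs elim by simp
    finally show ?case .
  qed
qed

lemma LBviii:
  assumes Lc: "Lc > 0" and Ls: "Ls > 0" and rc: "rc > 0" and rs: "rs > 0" and rs1: "rs < 1"
  shows "LBexp Lc Ls rs rc (rs + Ls * (1 - rs))"
  unfolding LBexp_def
proof (intro exI conjI)
  let ?C = "cL Ls / 2 powr Ls"
  show "?C > 0" using cL_pos[OF Ls] by simp
  show "eventually (\<lambda>\<rho>. ?C * \<rho> powr (- (rs + Ls * (1 - rs))) \<le> EDr Lc Ls rs rc \<rho>) at_top"
    using eventually_gt_at_top[of 1] ev_powr_ge2[OF rs]
  proof eventually_elim
    case (elim \<rho>)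
    define b where "b = \<rho> powr (rs - 1) / 2"
    have b0: "0 < b" using elim unfolding b_def by simp
    have b1: "b \<le> 1" unfolding b_def using elim rs1 pw_le1[of \<rho> "rs-1"] by auto
    have rb: "\<rho> * b = \<rho> powr rs / 2" unfolding b_def using elim pw1[of \<rho> rs] by simp
    have cond: "1 + \<rho> * b \<le> \<rho> powr rs" using rb elim by simp
    have bL: "b powr Ls = \<rho> powr ((rs - 1) * Ls) / 2 powr Ls" unfolding b_def using elim
      by (simp add: powr_divide powr_powr)
    define X where "X = \<rho> powr ((rs - 1) * Ls)"
    have K: "0 \<le> cL Ls * (X / 2 powr Ls)" using cL_pos[OF Ls] unfolding X_def by simp
    have q: "1 / \<rho> powr rs \<le> 1 / (\<rho> * b + 1)" using cond elim b0 by (intro divide_left_mono) (auto intro!: mult_pos_pos add_pos_pos)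
    have e: "- (rs + Ls * (1 - rs)) = (rs - 1) * Ls + (- rs)" by (simp add: algebra_simps)
    have "?C * \<rho> powr (- (rs + Ls * (1 - rs))) = ?C * (X * \<rho> powr (- rs))"
      unfolding X_def by (simp only: e powr_add)
    also have "\<dots> = 1 / \<rho> powr rs * (cL Ls * (X / 2 powr Ls))"
      using elim by (simp add: field_simps powr_minus_divide)
    also have "\<dots> \<le> 1 / (\<rho> * b + 1) * (cL Ls * (X / 2 powr Ls))"
      by (rule mult_right_mono[OF q K])
    also have "\<dots> = 1 / (\<rho> * b + 1) * (cL Ls * b powr Ls)" unfolding bL X_def ..
    also have "\<dots> \<le> EDr Lc Ls rs rc \<rho>"
      using LB3[OF Lc Ls elim(1) rc _ b0 b1 cond] rs by simp
    finally show ?case .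
  qed
qed

lemma LBix:
  assumes Lc: "Lc > 0" and Ls: "Ls > 0" and rc: "rc > 0" and rs: "rs \<ge> 1"
  shows "LBexp Lc Ls rs rc 1"
  unfolding LBexp_def
proof (intro exI conjI)
  let ?C = "cL Ls * (1/2) powr Ls"
  show "?C > 0" using cL_pos[OF Ls] by simp
  show "eventually (\<lambda>\<rho>. ?C * \<rho> powr (- 1) \<le> EDr Lc Ls rs rc \<rho>) at_top"
    using eventually_ge_at_top[of 2]
  proof eventually_elim
    case (elim \<rho>)
    have r1: "\<rho> > 1" using elim by simp
    have "\<rho> \<le> \<rho> powr rs" using powr_mono[of 1 rs \<rho>] rs elim by simp
    then have cond: "1 + \<rho> * (1/2) \<le> \<rho> powr rs" using elim by simp
    have K: "0 \<le> cL Ls * (1/2) powr Ls" using cL_pos[OF Ls] by simp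
    have q: "1 / \<rho> \<le> 1 / (\<rho> * (1/2) + 1)" using elim by (intro divide_left_mono) auto
    have m1: "\<rho> powr (- 1) = 1 / \<rho>" using elim by (simp add: powr_minus_divide)
    have "?C * \<rho> powr (- 1) = 1 / \<rho> * (cL Ls * (1/2) powr Ls)"
      unfolding m1 by simp
    also have "\<dots> \<le> 1 / (\<rho> * (1/2) + 1) * (cL Ls * (1/2) powr Ls)"
      by (rule mult_right_mono[OF q K])
    also have "\<dots> \<le> EDr Lc Ls rs rc \<rho>"
      using LB3[OF Lc Ls r1 rc _ _ _ cond] rs by simp
    finally show ?case .
  qed
qed



definition MM :: "real \<Rightarrow> real \<Rightarrow> real" where
  "MM L a = KK L * (Gamma (L-a) / L powr (L-a))"

lemma MM_nonneg: "L > 0 \<Longrightarrow> a < L \<Longrightarrow> MM L a \<ge> 0"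
  unfolding MM_def using KK_pos Gamma_real_pos[of "L-a"] by (simp add: less_imp_le)

lemma mneg_nonneg: "mneg a x \<ge> 0"
  unfolding mneg_def by simp

lemma mneg_mult: "mneg a x * mneg b x = mneg (a+b) x"
  unfolding mneg_def by (auto simp: powr_add[symmetric] algebra_simps)

lemma int_prod_mneg:
  assumes Lc: "Lc > 0" and Ls: "Ls > 0" and A: "A \<ge> 0"
    and a: "0 \<le> a" "a < Lc" and b: "0 \<le> b" "b < Ls"
  shows "(\<integral>\<^sup>+p. ennreal (A * mneg a (fst p) * mneg b (snd p)) \<partial>nakagami_law Lc Ls) = ennreal (A * MM Lc a * MM Ls b)"
proof -
  have "(\<integral>\<^sup>+p. ennreal (A * mneg a (fst p) * mneg b (snd p)) \<partial>nakagami_law Lc Ls)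
     = (\<integral>\<^sup>+p. ennreal (A * mneg a (fst p)) * ennreal (mneg b (snd p)) \<partial>nakagami_law Lc Ls)"
    using A by (intro nn_integral_cong) (simp add: ennreal_mult' mneg_nonneg)
  also have "\<dots> = (\<integral>\<^sup>+x. ennreal (A * mneg a x) \<partial>gamma_dist Lc (1/Lc)) * (\<integral>\<^sup>+y. ennreal (mneg b y) \<partial>gamma_dist Ls (1/Ls))"
    by (rule nak_prod[OF Lc Ls]) measurable
  also have "(\<integral>\<^sup>+x. ennreal (A * mneg a x) \<partial>gamma_dist Lc (1/Lc)) = ennreal A * (\<integral>\<^sup>+x. ennreal (mneg a x) \<partial>gamma_dist Lc (1/Lc))"
    using A by (subst nn_integral_cmult[symmetric]) (auto intro!: meas_gamma nn_integral_cong simp: ennreal_mult' mneg_nonneg)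
  also have "ennreal A * (\<integral>\<^sup>+x. ennreal (mneg a x) \<partial>gamma_dist Lc (1/Lc)) * (\<integral>\<^sup>+y. ennreal (mneg b y) \<partial>gamma_dist Ls (1/Ls)) = ennreal A * ennreal (MM Lc a) * ennreal (MM Ls b)"
    using moment[OF Lc a] moment[OF Ls b] unfolding MM_def by simp
  finally show ?thesis
    using A MM_nonneg[OF Lc a(2)] MM_nonneg[OF Ls b(2)] by (simp add: ennreal_mult)
qed

lemma int_snd_mneg:
  assumes Lc: "Lc > 0" and Ls: "Ls > 0" and A: "A \<ge> 0" and b: "0 \<le> b" "b < Ls"
  shows "(\<integral>\<^sup>+p. ennreal (A * mneg b (snd p)) \<partial>nakagami_law Lc Ls) = ennreal (A * MM Ls b)"
proof -
  have "(\<integral>\<^sup>+p. ennreal (A * mneg b (snd p)) \<partial>nakagami_law Lc Ls) = (\<integral>\<^sup>+y. ennreal (A * mneg b y) \<partial>gamma_dist Ls (1/Ls))"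
    by (rule nak_snd[OF Lc Ls]) measurable
  also have "\<dots> = ennreal A * (\<integral>\<^sup>+x. ennreal (mneg b x) \<partial>gamma_dist Ls (1/Ls))"
    using A by (subst nn_integral_cmult[symmetric]) (auto intro!: meas_gamma nn_integral_cong simp: ennreal_mult' mneg_nonneg)
  also have "\<dots> = ennreal A * ennreal (MM Ls b)"
    using moment[OF Ls b] unfolding MM_def by simp
  finally show ?thesis
    using A MM_nonneg[OF Ls b(2)] by (simp add: ennreal_mult)
qed

lemma int_const:
  assumes Lc: "Lc > 0" and Ls: "Ls > 0" and A: "A \<ge> 0"
  shows "(\<integral>\<^sup>+p. ennreal A \<partial>nakagami_law Lc Ls) = ennreal A"
  using nak_one[OF Lc Ls] by (simp add: nn_integral_const)

lemma U1:
  assumes x: "x > 0" and t: "t > 0" and al: "\<alpha> \<ge> 0" and xt: "x \<le> t"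
  shows "1 \<le> t powr \<alpha> * mneg \<alpha> x"
proof -
  have "1 \<le> (t / x) powr \<alpha>" using x t xt al by (simp add: ge_one_powr_ge_zero)
  also have "\<dots> = t powr \<alpha> * mneg \<alpha> x" using x t unfolding mneg_def
    by (simp add: powr_divide powr_minus_divide)
  finally show ?thesis .
qed

lemma U2:
  assumes y: "y > 0" and \<rho>: "\<rho> > 1" and b: "0 \<le> \<beta>" "\<beta> \<le> 1"
  shows "1 / (\<rho> * y + 1) \<le> \<rho> powr (- \<beta>) * mneg \<beta> y"
proof -
  have py: "\<rho> * y > 0" using y \<rho> by simp
  have "(\<rho> * y) powr \<beta> \<le> \<rho> * y + 1"
  proof (cases "\<rho> * y \<ge> 1")
    case True
    then have "(\<rho> * y) powr \<beta> \<le> (\<rho> * y) powr 1" using b by (intro powr_mono) auto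
    then show ?thesis using py by simp
  next
    case False
    then have "(\<rho> * y) powr \<beta> \<le> 1" using b py by (intro powr_le1) auto
    then show ?thesis using py by simp
  qed
  then have "1 / (\<rho> * y + 1) \<le> 1 / (\<rho> * y) powr \<beta>" using py by (intro divide_left_mono) (auto intro!: mult_pos_pos)
  also have "\<dots> = \<rho> powr (- \<beta>) * mneg \<beta> y" using y \<rho> unfolding mneg_def
    by (simp add: powr_mult powr_minus_divide)
  finally show ?thesis .
qed

lemma U3:
  assumes y: "y > 0" and \<rho>: "\<rho> > 1" and b: "0 \<le> \<beta>" "\<beta> \<le> 1" and r: "r \<ge> 0"
  shows "1 / (\<rho> * y + \<rho> powr r) \<le> \<rho> powr (- \<beta> + r * (\<beta> - 1)) * mneg \<beta> y"
proof -
  define u where "u = \<rho> * y"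
  define v where "v = \<rho> powr r"
  have u: "u > 0" using y \<rho> unfolding u_def by simp
  have v: "v > 0" using \<rho> unfolding v_def by simp
  define m where "m = max u v"
  have m: "m > 0" "u \<le> m" "v \<le> m" using u v unfolding m_def by auto
  have "u powr \<beta> * v powr (1 - \<beta>) \<le> m powr \<beta> * m powr (1 - \<beta>)"
    using m u v b by (intro mult_mono powr_mono2) auto
  also have "\<dots> = m" using m by (simp add: powr_add[symmetric])
  also have "\<dots> \<le> u + v" using u v unfolding m_def by auto
  finally have ineq: "u powr \<beta> * v powr (1 - \<beta>) \<le> u + v" .
  have pos: "0 < u powr \<beta> * v powr (1 - \<beta>)" using u v by simp
  have "1 / (u + v) \<le> 1 / (u powr \<beta> * v powr (1 - \<beta>))" using ineq pos by (intro divide_left_mono) auto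
  also have "\<dots> = \<rho> powr (- \<beta> + r * (\<beta> - 1)) * mneg \<beta> y"
  proof -
    have e1: "u powr \<beta> * v powr (1-\<beta>) = \<rho> powr \<beta> * y powr \<beta> * \<rho> powr (r*(1-\<beta>))"
      unfolding u_def v_def using y \<rho> by (simp add: powr_mult powr_powr)
    have key: "\<rho> powr (- \<beta> + r * (\<beta> - 1)) * (\<rho> powr \<beta> * \<rho> powr (r*(1-\<beta>))) = 1"
    proof -
      have "\<rho> powr (- \<beta> + r * (\<beta> - 1)) * (\<rho> powr \<beta> * \<rho> powr (r*(1-\<beta>))) = \<rho> powr ((- \<beta> + r * (\<beta> - 1)) + (\<beta> + r*(1-\<beta>)))"
        by (simp only: powr_add mult.assoc)
      also have "(- \<beta> + r * (\<beta> - 1)) + (\<beta> + r*(1-\<beta>)) = 0" by (simp add: algebra_simps)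
      finally show ?thesis using \<rho> by simp
    qed
    have my: "mneg \<beta> y = 1 / y powr \<beta>" using y unfolding mneg_def by (simp add: powr_minus_divide)
    have pr: "\<rho> powr \<beta> * \<rho> powr (r*(1-\<beta>)) > 0" using \<rho> by simp
    have yb: "y powr \<beta> > 0" using y by simp
    define E where "E = \<rho> powr (- \<beta> + r * (\<beta> - 1))"
    define P where "P = \<rho> powr \<beta> * \<rho> powr (r*(1-\<beta>))"
    have kE: "E * P = 1" using key unfolding E_def P_def .
    have P0: "P > 0" using pr unfolding P_def .
    have "1 / (\<rho> powr \<beta> * y powr \<beta> * \<rho> powr (r*(1-\<beta>))) = (1 / P) * (1 / y powr \<beta>)"
      unfolding P_def by (simp add: field_simps)
    also have "1 / P = E" using kE P0 by (simp add: field_simps)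
    finally show ?thesis unfolding e1 my E_def .
  qed
  finally show ?thesis unfolding u_def v_def .
qed



lemma ED_upper3:
  assumes Lc: "Lc > 0" and Ls: "Ls > 0" and \<rho>: "\<rho> > 1" and rc: "rc > 0" and rs: "rs \<ge> 0"
    and A: "A1 \<ge> 0" "A2 \<ge> 0" "A3 \<ge> 0"
    and a1: "0 \<le> a1" "a1 < Lc" and b1: "0 \<le> b1" "b1 < Ls" and b2: "0 \<le> b2" "b2 < Ls"
    and pt: "\<And>x y. 0 < x \<Longrightarrow> 0 < y \<Longrightarrow> Gf \<rho> rs rc x y \<le> A1 * mneg a1 x * mneg b1 y + A2 * mneg b2 y + A3"
  shows "EDr Lc Ls rs rc \<rho> \<le> A1 * MM Lc a1 * MM Ls b1 + A2 * MM Ls b2 + A3"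
proof (rule ED_upper[OF Lc Ls \<rho> rc rs])
  show "0 \<le> A1 * MM Lc a1 * MM Ls b1 + A2 * MM Ls b2 + A3"
    using A MM_nonneg[OF Lc a1(2)] MM_nonneg[OF Ls b1(2)] MM_nonneg[OF Ls b2(2)] by simp
  have "IG Lc Ls rs rc \<rho> \<le> (\<integral>\<^sup>+p. ennreal (A1 * mneg a1 (fst p) * mneg b1 (snd p) + A2 * mneg b2 (snd p) + A3) \<partial>nakagami_law Lc Ls)"
    by (rule IG_upper_pt[OF Lc Ls pt])
  also have "\<dots> = (\<integral>\<^sup>+p. ennreal (A1 * mneg a1 (fst p) * mneg b1 (snd p)) + ennreal (A2 * mneg b2 (snd p)) + ennreal A3 \<partial>nakagami_law Lc Ls)"
    using A by (intro nn_integral_cong) (simp add: mneg_nonneg ennreal_plus[symmetric] del: ennreal_plus)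
  also have "\<dots> = (\<integral>\<^sup>+p. ennreal (A1 * mneg a1 (fst p) * mneg b1 (snd p)) + ennreal (A2 * mneg b2 (snd p)) \<partial>nakagami_law Lc Ls) + (\<integral>\<^sup>+p. ennreal A3 \<partial>nakagami_law Lc Ls)"
    by (rule nn_integral_add) (auto intro!: meas_nak)
  also have "(\<integral>\<^sup>+p. ennreal (A1 * mneg a1 (fst p) * mneg b1 (snd p)) + ennreal (A2 * mneg b2 (snd p)) \<partial>nakagami_law Lc Ls) =
      (\<integral>\<^sup>+p. ennreal (A1 * mneg a1 (fst p) * mneg b1 (snd p)) \<partial>nakagami_law Lc Ls) + (\<integral>\<^sup>+p. ennreal (A2 * mneg b2 (snd p)) \<partial>nakagami_law Lc Ls)"
    by (rule nn_integral_add) (auto intro!: meas_nak)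
  also have "\<dots> = ennreal (A1 * MM Lc a1 * MM Ls b1) + ennreal (A2 * MM Ls b2)"
    using int_prod_mneg[OF Lc Ls A(1) a1 b1] int_snd_mneg[OF Lc Ls A(2) b2] by simp
  also have "(\<integral>\<^sup>+p. ennreal A3 \<partial>nakagami_law Lc Ls) = ennreal A3" by (rule int_const[OF Lc Ls A(3)])
  finally show "IG Lc Ls rs rc \<rho> \<le> ennreal (A1 * MM Lc a1 * MM Ls b1 + A2 * MM Ls b2 + A3)"
    using A MM_nonneg[OF Lc a1(2)] MM_nonneg[OF Ls b1(2)] MM_nonneg[OF Ls b2(2)] by (simp add: ennreal_plus[symmetric] del: ennreal_plus)
qed



lemma MM_pos: "L > 0 \<Longrightarrow> a < L \<Longrightarrow> MM L a > 0"
  unfolding MM_def using KK_pos Gamma_real_pos[of "L-a"] by simp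

lemma UBA:
  assumes Lc: "Lc > 0" and Ls: "Ls > 0" "Ls \<le> 1" and r: "0 < r" "r \<le> 1" and t: "0 < t" "t < 1"
  shows "UBexp Lc Ls 0 r (min ((1-r)*(Lc*t) + Ls*t) (Ls*t + r*(1 - Ls*t)))"
  unfolding UBexp_def
proof (intro exI conjI)
  define \<alpha> where "\<alpha> = Lc*t"
  define \<beta> where "\<beta> = Ls*t"
  have al: "0 \<le> \<alpha>" "\<alpha> < Lc" unfolding \<alpha>_def using Lc t by (auto simp: mult_less_cancel_left1)
  have be: "0 \<le> \<beta>" "\<beta> < Ls" "\<beta> \<le> 1" unfolding \<beta>_def using Ls t by (auto simp: mult_less_cancel_left1 mult_le_one)
  let ?e = "min ((1-r)*(Lc*t) + Ls*t) (Ls*t + r*(1 - Ls*t))"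
  let ?C = "MM Lc \<alpha> * MM Ls \<beta> + MM Ls \<beta> + 1"
  show "?C > 0" using MM_pos[OF Lc al(2)] MM_pos[OF Ls(1) be(2)] by (simp add: add_pos_pos)
  show "eventually (\<lambda>\<rho>. EDr Lc Ls 0 r \<rho> \<le> ?C * \<rho> powr (- ?e)) at_top"
    using eventually_gt_at_top[of 1]
  proof eventually_elim
    case (elim \<rho>)
    define A1 where "A1 = \<rho> powr ((r - 1) * \<alpha> - \<beta>)"
    define A2 where "A2 = \<rho> powr (- \<beta> + r * (\<beta> - 1))"
    have A: "A1 \<ge> 0" "A2 \<ge> 0" "(0::real) \<ge> 0" unfolding A1_def A2_def by auto
    have R1: "1 < \<rho> powr r" using powr_less_mono[of 0 r \<rho>] r elim by simp
    have pt: "Gf \<rho> 0 r x y \<le> A1 * mneg \<alpha> x * mneg \<beta> y + A2 * mneg \<beta> y + 0" if x: "0 < x" and y: "0 < y" for x y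
    proof -
      have py: "1 < 1 + \<rho> * y" using x y elim by simp
      have "(\<rho> powr r - 1) / (1 + \<rho> * y) < (\<rho> powr r - 1) / 1"
        using R1 py by (intro divide_strict_left_mono) auto
      then have nc2: "\<not> (\<rho> powr r \<le> 1 + (\<rho> powr (0 + r) - 1) / (1 + \<rho> * y))" by simp
      have T1: "0 \<le> A1 * mneg \<alpha> x * mneg \<beta> y" using A by (simp add: mneg_nonneg)
      have T2: "0 \<le> A2 * mneg \<beta> y" using A by (simp add: mneg_nonneg)
      show ?thesis
      proof (cases "1 + \<rho> * x \<le> \<rho> powr r")
        case True
        have "x \<le> \<rho> powr r / \<rho>" using True elim by (simp add: field_simps)
        also have "\<rho> powr r / \<rho> = \<rho> powr (r - 1)" using elim by (simp add: powr_diff)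
        finally have xr: "x \<le> \<rho> powr (r - 1)" .
        have u1: "1 \<le> (\<rho> powr (r - 1)) powr \<alpha> * mneg \<alpha> x" by (rule U1[OF x _ al(1) xr]) (use elim in simp)
        have u2: "1 / (\<rho> * y + 1) \<le> \<rho> powr (- \<beta>) * mneg \<beta> y" by (rule U2[OF y elim be(1) be(3)])
        have G: "Gf \<rho> 0 r x y = 1 / (\<rho> * y + 1)" using True unfolding Gf_def by simp
        have "1 / (\<rho> * y + 1) \<le> ((\<rho> powr (r - 1)) powr \<alpha> * mneg \<alpha> x) * (\<rho> powr (- \<beta>) * mneg \<beta> y)"
        proof -
          have "1 * (1 / (\<rho> * y + 1)) \<le> ((\<rho> powr (r - 1)) powr \<alpha> * mneg \<alpha> x) * (\<rho> powr (- \<beta>) * mneg \<beta> y)"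
            by (rule mult_mono[OF u1 u2]) (use x y elim in \<open>simp_all add: mneg_nonneg\<close>)
          then show ?thesis by simp
        qed
        also have "\<dots> = (\<rho> powr ((r - 1) * \<alpha>) * \<rho> powr (- \<beta>)) * mneg \<alpha> x * mneg \<beta> y"
          by (simp add: powr_powr mult_ac)
        also have "\<rho> powr ((r - 1) * \<alpha>) * \<rho> powr (- \<beta>) = A1" unfolding A1_def
          by (simp only: diff_conv_add_uminus powr_add)
        finally show ?thesis using G T2 by simp
      next
        case False
        have G: "Gf \<rho> 0 r x y = 1 / (\<rho> * y + \<rho> powr r)" using False nc2 unfolding Gf_def by simp
        have "1 / (\<rho> * y + \<rho> powr r) \<le> A2 * mneg \<beta> y" unfolding A2_def
          by (rule U3[OF y elim be(1) be(3)]) (use r in simp)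
        then show ?thesis using G T1 by simp
      qed
    qed
    have ED: "EDr Lc Ls 0 r \<rho> \<le> A1 * MM Lc \<alpha> * MM Ls \<beta> + A2 * MM Ls \<beta> + 0"
      by (rule ED_upper3[OF Lc Ls(1) elim r(1) _ A al be(1,2) be(1,2) pt]) auto
    have E1: "A1 \<le> \<rho> powr (- ?e)" unfolding A1_def using elim
      by (intro powr_mono) (auto simp: \<alpha>_def \<beta>_def algebra_simps)
    have E2: "A2 \<le> \<rho> powr (- ?e)" unfolding A2_def using elim
      by (intro powr_mono) (auto simp: \<alpha>_def \<beta>_def algebra_simps)
    have M: "MM Lc \<alpha> * MM Ls \<beta> \<ge> 0" "MM Ls \<beta> \<ge> 0" using MM_pos[OF Lc al(2)] MM_pos[OF Ls(1) be(2)] by auto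
    have "A1 * MM Lc \<alpha> * MM Ls \<beta> + A2 * MM Ls \<beta> + 0 \<le> \<rho> powr (- ?e) * (MM Lc \<alpha> * MM Ls \<beta>) + \<rho> powr (- ?e) * MM Ls \<beta>"
      using mult_right_mono[OF E1 M(1)] mult_right_mono[OF E2 M(2)] by (simp add: mult.assoc)
    also have "\<dots> \<le> ?C * \<rho> powr (- ?e)" by (simp add: algebra_simps)
    finally show ?case using ED by simp
  qed
qed



lemma UBB:
  assumes Lc: "Lc > 0" and Ls: "Ls > 1" and rc: "0 < rc" "rc < 1" and rs: "0 < rs" "rs < 1" and t: "0 < t" "t < 1"
  shows "UBexp Lc Ls rs rc (min (min ((1-rc)*(Lc*t) + 1) ((1-rs)*((Ls-1)*t) + 1)) (rs+rc))"
  unfolding UBexp_def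
proof (intro exI conjI)
  have Ls0: "Ls > 0" using Ls by simp
  define \<alpha> where "\<alpha> = Lc*t"
  define \<gamma> where "\<gamma> = (Ls-1)*t"
  have al: "0 \<le> \<alpha>" "\<alpha> < Lc" unfolding \<alpha>_def using Lc t by (auto simp: mult_less_cancel_left1)
  have lt0: "(Ls-1)*t < (Ls-1)*1" using Ls t by (intro mult_strict_left_mono) auto
  have lt: "(Ls-1)*t < Ls-1" using lt0 by (simp only: mult_1_right)
  have ga1: "0 \<le> \<gamma>" unfolding \<gamma>_def using Ls t by simp
  have ga2: "\<gamma> + 1 < Ls" unfolding \<gamma>_def using lt by linarith
  note ga = ga1 ga2
  have g1: "0 \<le> \<gamma> + 1" "(0::real) \<le> 1" "(1::real) < Ls" using ga Ls by auto
  let ?e = "min (min ((1-rc)*(Lc*t) + 1) ((1-rs)*((Ls-1)*t) + 1)) (rs+rc)"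
  let ?C = "MM Lc \<alpha> * MM Ls 1 + 2 powr \<gamma> * MM Ls (\<gamma>+1) + 1"
  show "?C > 0" using MM_pos[OF Lc al(2)] MM_pos[OF Ls0 ga(2)] MM_pos[OF Ls0 g1(3)] by (simp add: add_pos_pos)
  show "eventually (\<lambda>\<rho>. EDr Lc Ls rs rc \<rho> \<le> ?C * \<rho> powr (- ?e)) at_top"
    using eventually_gt_at_top[of 1] ev_powr_ge2[OF rc(1)]
  proof eventually_elim
    case (elim \<rho>)
    have \<rho>: "\<rho> > 1" using elim by simp
    define A1 where "A1 = \<rho> powr ((rc - 1) * \<alpha> - 1)"
    define A2 where "A2 = 2 powr \<gamma> * \<rho> powr ((rs - 1) * \<gamma> - 1)"
    define A3 where "A3 = \<rho> powr (- (rs + rc))"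
    have A: "A1 \<ge> 0" "A2 \<ge> 0" "A3 \<ge> 0" unfolding A1_def A2_def A3_def by auto
    have pt: "Gf \<rho> rs rc x y \<le> A1 * mneg \<alpha> x * mneg 1 y + A2 * mneg (\<gamma>+1) y + A3" if x: "0 < x" and y: "0 < y" for x y
    proof -
      have T1: "0 \<le> A1 * mneg \<alpha> x * mneg 1 y" using A by (simp add: mneg_nonneg)
      have T2: "0 \<le> A2 * mneg (\<gamma>+1) y" using A by (simp add: mneg_nonneg)
      have u2: "1 / (\<rho> * y + 1) \<le> \<rho> powr (- 1) * mneg 1 y" by (rule U2[OF y \<rho>]) auto
      have ypos: "0 \<le> 1 / (\<rho> * y + 1)" using y \<rho> by simp
      show ?thesis
      proof (cases "1 + \<rho> * x \<le> \<rho> powr rc")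
        case True
        have "x \<le> \<rho> powr rc / \<rho>" using True \<rho> by (simp add: field_simps)
        also have "\<rho> powr rc / \<rho> = \<rho> powr (rc - 1)" using \<rho> by (simp add: powr_diff)
        finally have xr: "x \<le> \<rho> powr (rc - 1)" .
        have u1: "1 \<le> (\<rho> powr (rc - 1)) powr \<alpha> * mneg \<alpha> x" by (rule U1[OF x _ al(1) xr]) (use \<rho> in simp)
        have G: "Gf \<rho> rs rc x y = 1 / (\<rho> * y + 1)" using True unfolding Gf_def by simp
        have "1 * (1 / (\<rho> * y + 1)) \<le> ((\<rho> powr (rc - 1)) powr \<alpha> * mneg \<alpha> x) * (\<rho> powr (- 1) * mneg 1 y)"
          by (rule mult_mono[OF u1 u2]) (use ypos in \<open>simp_all add: mneg_nonneg\<close>)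
        also have "\<dots> = (\<rho> powr ((rc - 1) * \<alpha>) * \<rho> powr (- 1)) * mneg \<alpha> x * mneg 1 y"
          by (simp add: powr_powr mult_ac)
        also have "\<rho> powr ((rc - 1) * \<alpha>) * \<rho> powr (- 1) = A1" unfolding A1_def
          by (simp only: diff_conv_add_uminus powr_add)
        finally show ?thesis using G T2 A by simp
      next
        case c1: False
        show ?thesis
        proof (cases "\<rho> powr rc \<le> 1 + (\<rho> powr (rs+rc) - 1) / (1 + \<rho> * y)")
          case True
          have d: "1 + \<rho> * y > 0" using \<rho> y by (simp add: add_pos_pos)
          have "(\<rho> powr rc - 1) * (1 + \<rho> * y) \<le> \<rho> powr (rs+rc) - 1"
            using True d by (simp add: field_simps)
          moreover have "\<rho> powr rc / 2 \<le> \<rho> powr rc - 1" using elim by simp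
          ultimately have "\<rho> powr rc / 2 * (1 + \<rho> * y) \<le> \<rho> powr (rs+rc)"
            using d by (smt (verit) mult_right_mono)
          then have "\<rho> powr rc * (1 + \<rho> * y) \<le> \<rho> powr rc * (2 * \<rho> powr rs)"
            by (simp add: powr_add algebra_simps)
          then have "1 + \<rho> * y \<le> 2 * \<rho> powr rs" using \<rho> by simp
          then have "y \<le> 2 * \<rho> powr rs / \<rho>" using \<rho> by (simp add: field_simps)
          also have "2 * \<rho> powr rs / \<rho> = 2 * \<rho> powr (rs - 1)" using \<rho> by (simp add: powr_diff)
          finally have yr: "y \<le> 2 * \<rho> powr (rs - 1)" .
          have u1: "1 \<le> (2 * \<rho> powr (rs - 1)) powr \<gamma> * mneg \<gamma> y" by (rule U1[OF y _ ga(1) yr]) (use \<rho> in simp)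
          have G: "Gf \<rho> rs rc x y = 1 / (\<rho> * y + 1)" using True unfolding Gf_def by simp
          have "1 * (1 / (\<rho> * y + 1)) \<le> ((2 * \<rho> powr (rs - 1)) powr \<gamma> * mneg \<gamma> y) * (\<rho> powr (- 1) * mneg 1 y)"
            by (rule mult_mono[OF u1 u2]) (use ypos in \<open>simp_all add: mneg_nonneg\<close>)
          also have "\<dots> = 2 powr \<gamma> * (\<rho> powr ((rs - 1) * \<gamma>) * \<rho> powr (- 1)) * (mneg \<gamma> y * mneg 1 y)"
            using \<rho> by (simp add: powr_powr powr_mult mult_ac)
          also have "\<rho> powr ((rs - 1) * \<gamma>) * \<rho> powr (- 1) = \<rho> powr ((rs - 1) * \<gamma> - 1)"
            by (simp only: diff_conv_add_uminus powr_add)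
          also have "mneg \<gamma> y * mneg 1 y = mneg (\<gamma>+1) y" by (rule mneg_mult)
          finally have "Gf \<rho> rs rc x y \<le> A2 * mneg (\<gamma>+1) y" using G unfolding A2_def by (simp add: mult.assoc)
          then show ?thesis using T1 A by simp
        next
          case False
          have G: "Gf \<rho> rs rc x y = 1 / (\<rho> * y + \<rho> powr (rs+rc))" using c1 False unfolding Gf_def by simp
          have "1 / (\<rho> * y + \<rho> powr (rs+rc)) \<le> 1 / \<rho> powr (rs+rc)"
            using \<rho> y by (intro divide_left_mono) (auto intro!: mult_pos_pos add_pos_pos)
          also have "\<dots> = A3" unfolding A3_def by (rule powr_minus_divide[symmetric])
          finally show ?thesis using G T1 T2 by simp
        qed
      qed
    qed
    have ED: "EDr Lc Ls rs rc \<rho> \<le> A1 * MM Lc \<alpha> * MM Ls 1 + A2 * MM Ls (\<gamma>+1) + A3"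
      by (rule ED_upper3[OF Lc Ls0 \<rho> rc(1) _ A al g1(2) g1(3) g1(1) ga(2) pt]) (use rs in auto)
    have E1: "A1 \<le> \<rho> powr (- ?e)" unfolding A1_def using \<rho>
      by (intro powr_mono) (auto simp: \<alpha>_def algebra_simps)
    have E2: "\<rho> powr ((rs - 1) * \<gamma> - 1) \<le> \<rho> powr (- ?e)" using \<rho>
      by (intro powr_mono) (auto simp: \<gamma>_def algebra_simps)
    have E3: "A3 \<le> \<rho> powr (- ?e)" unfolding A3_def using \<rho>
      by (intro powr_mono) auto
    have M: "MM Lc \<alpha> * MM Ls 1 \<ge> 0" "2 powr \<gamma> * MM Ls (\<gamma>+1) \<ge> 0"
      using MM_pos[OF Lc al(2)] MM_pos[OF Ls0 ga(2)] MM_pos[OF Ls0 g1(3)] by auto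
    have "A1 * MM Lc \<alpha> * MM Ls 1 + A2 * MM Ls (\<gamma>+1) + A3 \<le>
        \<rho> powr (- ?e) * (MM Lc \<alpha> * MM Ls 1) + \<rho> powr (- ?e) * (2 powr \<gamma> * MM Ls (\<gamma>+1)) + \<rho> powr (- ?e)"
      using mult_right_mono[OF E1 M(1)] mult_right_mono[OF E2 M(2)] E3 unfolding A2_def by (simp add: mult_ac)
    also have "\<dots> = ?C * \<rho> powr (- ?e)" by (simp add: algebra_simps)
    finally show ?case using ED by simp
  qed
qed



lemma fexp_eq: "(\<lambda>\<rho>. - ln (ED_s Lc Ls \<rho> (rs / 2 * log 2 \<rho>) (rc / 2 * log 2 \<rho>)) / ln \<rho>) = fexp Lc Ls rs rc"
  unfolding fexp_def EDr_def by simp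

lemma achieve:
  assumes D: "D > 0" and LB: "LBexp Lc Ls rs rc D"
    and UB: "\<And>t. 0 < t \<Longrightarrow> t < 1 \<Longrightarrow> UBexp Lc Ls rs rc (t * D)"
  shows "(fexp Lc Ls rs rc \<longlongrightarrow> D) at_top"
proof (rule order_tendstoI)
  fix a assume a: "a < D"
  define t where "t = max (1/2) ((a + D) / (2 * D))"
  have t0: "0 < t" unfolding t_def by simp
  have t1: "t < 1" unfolding t_def using a D by (simp add: field_simps)
  have "(a + D) / (2 * D) * D = (a + D) / 2" using D by (simp add: field_simps)
  moreover have "(a + D) / (2 * D) * D \<le> t * D" unfolding t_def using D by (intro mult_right_mono) auto
  ultimately have h: "(a + D) / 2 \<le> t * D" by simp
  have "a < (a + D) / 2" using a by simp
  then have "a < t * D" using h by linarith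
  then show "eventually (\<lambda>\<rho>. a < fexp Lc Ls rs rc \<rho>) at_top"
    using UB_ev[OF UB[OF t0 t1] LB] by simp
next
  fix a assume "a > D"
  then show "eventually (\<lambda>\<rho>. fexp Lc Ls rs rc \<rho> < a) at_top" using LB_ev[OF LB] by simp
qed

definition DA :: "real \<Rightarrow> real \<Rightarrow> real" where "DA Lc Ls = 1 - (1 - Ls)\<^sup>2 / (Lc + 1 - Ls)"
definition DB :: "real \<Rightarrow> real \<Rightarrow> real" where "DB Lc Ls = (Ls * (2 * Lc + 1) - Lc - 1) / (Ls * (Lc + 1) - 1)"

lemma caseA:
  assumes Lc: "Lc > 0" and Ls: "Ls > 0" "Ls \<le> 1"
  shows "DA Lc Ls \<in> {l. \<exists>rc rs. rc > 0 \<and> rs \<ge> 0 \<and> (fexp Lc Ls rs rc \<longlongrightarrow> l) at_top}"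
    and "\<And>rc rs l. rc > 0 \<Longrightarrow> rs \<ge> 0 \<Longrightarrow> (fexp Lc Ls rs rc \<longlongrightarrow> l) at_top \<Longrightarrow> l \<le> DA Lc Ls"
proof -
  define r where "r = Lc / (Lc + 1 - Ls)"
  have den: "Lc + 1 - Ls > 0" using Lc Ls by simp
  have r0: "0 < r" unfolding r_def using Lc den by simp
  have r1: "r \<le> 1" unfolding r_def using Lc den Ls by simp
  have D1: "DA Lc Ls = (1 - r) * Lc + Ls" unfolding DA_def r_def using den
    by (simp add: field_simps power2_eq_square)
  have D2: "DA Lc Ls = Ls + r * (1 - Ls)" unfolding DA_def r_def using den
    by (simp add: field_simps power2_eq_square)
  have Dpos: "DA Lc Ls > 0" using D2 r0 Ls by (simp add: add_pos_nonneg)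
  have DLs: "Ls \<le> DA Lc Ls" using D2 r0 Ls by simp
  show "DA Lc Ls \<in> {l. \<exists>rc rs. rc > 0 \<and> rs \<ge> 0 \<and> (fexp Lc Ls rs rc \<longlongrightarrow> l) at_top}"
  proof -
    have LB: "LBexp Lc Ls 0 r (DA Lc Ls)"
    proof (cases "Ls = 1")
      case True
      have "DA Lc Ls = max 1 (0 + r)" using D2 r1 True by simp
      then show ?thesis using LBi[OF Lc Ls(1) r0, of 0] by simp
    next
      case False
      then have "r < 1" unfolding r_def using Lc den Ls by simp
      then have "LBexp Lc Ls 0 r ((0 + r) + Ls * (1 - (0 + r)))" using LBii[OF Lc Ls(1) r0, of 0] by simp
      moreover have "(0 + r) + Ls * (1 - (0 + r)) = DA Lc Ls" using D2 by (simp add: algebra_simps)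
      ultimately show ?thesis by simp
    qed
    have UB: "UBexp Lc Ls 0 r (t * DA Lc Ls)" if t: "0 < t" "t < 1" for t
    proof (rule UBexp_mono[OF UBA[OF Lc Ls r0 r1 t]])
      have a: "t * DA Lc Ls \<le> (1-r)*(Lc*t) + Ls*t" unfolding D1 by (simp add: algebra_simps)
      have "r * t * (1 - Ls) \<le> r * (1 - Ls * t)"
      proof -
        have "r * t * (1 - Ls) \<le> r * 1 * (1 - Ls)" using r0 t Ls by (intro mult_right_mono mult_left_mono) auto
        also have "\<dots> = r * (1 - Ls)" by simp
        also have "\<dots> \<le> r * (1 - Ls * t)"
        proof -
          have "Ls * t \<le> Ls * 1" using Ls t by (intro mult_left_mono) auto
          then have "1 - Ls \<le> 1 - Ls * t" by simp
          then show ?thesis using r0 by (intro mult_left_mono) auto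
        qed
        finally show ?thesis .
      qed
      then have b: "t * DA Lc Ls \<le> Ls*t + r*(1 - Ls*t)" unfolding D2 by (simp add: algebra_simps)
      show "t * DA Lc Ls \<le> min ((1-r)*(Lc*t) + Ls*t) (Ls*t + r*(1 - Ls*t))" using a b by simp
    qed
    have "(fexp Lc Ls 0 r \<longlongrightarrow> DA Lc Ls) at_top" by (rule achieve[OF Dpos LB UB])
    then show ?thesis using r0 by blast
  qed
  fix rc rs l assume rc: "rc > 0" and rs: "rs \<ge> 0" and lim: "(fexp Lc Ls rs rc \<longlongrightarrow> l) at_top"
  show "l \<le> DA Lc Ls"
  proof (cases "rs > 0")
    case True
    then show ?thesis using LB_limit[OF LBvii[OF Lc Ls(1) rc True] lim] DLs by simp
  next
    case False
    then have rs0: "rs = 0" using rs by simp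
    show ?thesis
    proof (cases "rc \<ge> 1")
      case True
      then show ?thesis using LB_limit[OF LBv[OF Lc Ls(1) True rs] lim] DLs by simp
    next
      case False
      then have rc1: "rc < 1" by simp
      have l1: "l \<le> (rs + rc) + Ls * (1 - (rs + rc))" using LB_limit[OF LBii[OF Lc Ls(1) rc rs] lim] rc1 rs0 by simp
      have l2: "l \<le> Lc * (1 - rc) + Ls" using LB_limit[OF LBiii[OF Lc Ls(1) rc rs rc1] lim] .
      show ?thesis
      proof (cases "rc \<le> r")
        case True
        have "rc * (1 - Ls) \<le> r * (1 - Ls)" using True Ls by (intro mult_right_mono) auto
        then show ?thesis using l1 rs0 D2 by (simp add: algebra_simps)
      next
        case False
        have "Lc * (1 - rc) \<le> Lc * (1 - r)" using False Lc by (intro mult_left_mono) auto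
        then show ?thesis using l2 D1 by (simp add: algebra_simps)
      qed
    qed
  qed
qed



lemma algB:
  fixes Lc Ls :: real
  assumes Lc: "Lc > 0" and Ls: "Ls > 1"
  defines "Q \<equiv> Ls * (Lc + 1) - 1"
  shows "Q > 0"
    and "(Ls * (2 * Lc + 1) - Lc - 1) / Q - 1 = Lc * (Ls - 1) / Q"
    and "Lc * Ls / Q + (Lc + 1) * (Ls - 1) / Q = (Ls * (2 * Lc + 1) - Lc - 1) / Q"
    and "(1 - Lc * Ls / Q) * Lc + 1 = (Ls * (2 * Lc + 1) - Lc - 1) / Q"
    and "(1 - (Lc + 1) * (Ls - 1) / Q) * (Ls - 1) + 1 = (Ls * (2 * Lc + 1) - Lc - 1) / Q"
    and "Lc * Ls / Q < 1"
    and "(Lc + 1) * (Ls - 1) / Q < 1"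
    and "(Ls - 1 + Lc) * ((Ls * (2 * Lc + 1) - Lc - 1) / Q - 1) = Lc * (Ls - 1) * (2 - (Ls * (2 * Lc + 1) - Lc - 1) / Q)"
proof -
  have Qp: "Q > 0" unfolding Q_def using Lc Ls by (smt (verit) mult_less_cancel_left1 mult_pos_pos)
  then show "Q > 0" .
  have Qn: "Q \<noteq> 0" using Qp by simp
  show "(Ls * (2 * Lc + 1) - Lc - 1) / Q - 1 = Lc * (Ls - 1) / Q"
    using Qn by (simp add: field_simps; simp add: Q_def algebra_simps)
  show "Lc * Ls / Q + (Lc + 1) * (Ls - 1) / Q = (Ls * (2 * Lc + 1) - Lc - 1) / Q"
    using Qn by (simp add: field_simps; simp add: Q_def algebra_simps)
  show "(1 - Lc * Ls / Q) * Lc + 1 = (Ls * (2 * Lc + 1) - Lc - 1) / Q"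
    using Qn by (simp add: field_simps; simp add: Q_def algebra_simps)
  show "(1 - (Lc + 1) * (Ls - 1) / Q) * (Ls - 1) + 1 = (Ls * (2 * Lc + 1) - Lc - 1) / Q"
    using Qn by (simp add: field_simps; simp add: Q_def algebra_simps)
  show "Lc * Ls / Q < 1" using Qp Ls by (simp add: field_simps Q_def algebra_simps)
  show "(Lc + 1) * (Ls - 1) / Q < 1" using Qp Lc by (simp add: field_simps Q_def algebra_simps)
  show "(Ls - 1 + Lc) * ((Ls * (2 * Lc + 1) - Lc - 1) / Q - 1) = Lc * (Ls - 1) * (2 - (Ls * (2 * Lc + 1) - Lc - 1) / Q)"
    using Qn by (simp add: field_simps; simp add: Q_def algebra_simps)
qed

lemma caseB:
  assumes Lc: "Lc > 0" and Ls: "Ls > 1"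
  shows "DB Lc Ls \<in> {l. \<exists>rc rs. rc > 0 \<and> rs \<ge> 0 \<and> (fexp Lc Ls rs rc \<longlongrightarrow> l) at_top}"
    and "\<And>rc rs l. rc > 0 \<Longrightarrow> rs \<ge> 0 \<Longrightarrow> (fexp Lc Ls rs rc \<longlongrightarrow> l) at_top \<Longrightarrow> l \<le> DB Lc Ls"
proof -
  have Ls0: "Ls > 0" using Ls by simp
  define Q where "Q = Ls * (Lc + 1) - 1"
  define D where "D = DB Lc Ls"
  note A = algB[OF Lc Ls, folded Q_def]
  have Deq: "D = (Ls * (2 * Lc + 1) - Lc - 1) / Q" unfolding D_def DB_def Q_def ..
  have Qp: "Q > 0" by (rule A(1))
  have D1: "D - 1 = Lc * (Ls - 1) / Q" unfolding Deq by (rule A(2))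
  have "Lc * (Ls - 1) / Q > 0" using Qp Lc Ls by (intro divide_pos_pos mult_pos_pos) auto
  then have Dgt1: "D > 1" using D1 by linarith
  have Dge1: "D \<ge> 1" using Dgt1 by simp
  show "D \<in> {l. \<exists>rc rs. rc > 0 \<and> rs \<ge> 0 \<and> (fexp Lc Ls rs rc \<longlongrightarrow> l) at_top}"
  proof -
    define rc where "rc = Lc * Ls / Q"
    define rs where "rs = (Lc + 1) * (Ls - 1) / Q"
    have rc0: "0 < rc" "rc < 1" unfolding rc_def using Qp Lc Ls A(6) by auto
    have rs0: "0 < rs" "rs < 1" unfolding rs_def using Qp Lc Ls A(7) by auto
    have sD: "rs + rc = D" unfolding rs_def rc_def Deq using A(3) by simp
    have e1: "(1 - rc) * Lc + 1 = D" unfolding rc_def Deq by (rule A(4))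
    have e2: "(1 - rs) * (Ls - 1) + 1 = D" unfolding rs_def Deq by (rule A(5))
    have LB: "LBexp Lc Ls rs rc D" using LBi[OF Lc Ls0 rc0(1), of rs] rs0 sD Dge1 by simp
    have UB: "UBexp Lc Ls rs rc (t * D)" if t: "0 < t" "t < 1" for t
    proof (rule UBexp_mono[OF UBB[OF Lc Ls rc0 rs0 t]])
      have a: "t * D \<le> (1-rc)*(Lc*t) + 1"
      proof -
        have "(1-rc)*(Lc*t) + 1 = t * ((1 - rc) * Lc + 1) + (1 - t)" by (simp add: algebra_simps)
        then show ?thesis using e1 t by simp
      qed
      have b: "t * D \<le> (1-rs)*((Ls-1)*t) + 1"
      proof -
        have "(1-rs)*((Ls-1)*t) + 1 = t * ((1 - rs) * (Ls - 1) + 1) + (1 - t)" by (simp add: algebra_simps)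
        then show ?thesis using e2 t by simp
      qed
      have c: "t * D \<le> rs + rc" using sD t Dgt1 by (simp add: mult_le_cancel_right1)
      show "t * D \<le> min (min ((1-rc)*(Lc*t) + 1) ((1-rs)*((Ls-1)*t) + 1)) (rs+rc)" using a b c by simp
    qed
    have "(fexp Lc Ls rs rc \<longlongrightarrow> D) at_top" by (rule achieve[OF _ LB UB]) (use Dgt1 in simp_all)
    then show ?thesis using rc0 rs0 by (intro CollectI exI[of _ rc] exI[of _ rs]) auto
  qed
  fix rc rs l assume rc: "rc > 0" and rs: "rs \<ge> 0" and lim: "(fexp Lc Ls rs rc \<longlongrightarrow> l) at_top"
  show "l \<le> D"
  proof (cases "rs \<ge> 1")
    case True
    then show ?thesis using LB_limit[OF LBix[OF Lc Ls0 rc True] lim] Dge1 by simp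
  next
    case rs1: False
    show ?thesis
    proof (cases "rc \<ge> 1")
      case True
      then show ?thesis using LB_limit[OF LBvi[OF Lc Ls0 True rs] lim] Dge1 by simp
    next
      case rc1: False
      show ?thesis
      proof (cases "rs + rc \<le> 1")
        case True
        then show ?thesis using LB_limit[OF LBi[OF Lc Ls0 rc rs] lim] Dge1 by simp
      next
        case False
        have rsp: "rs > 0" using False rc1 by simp
        have l1: "l \<le> rs + rc" using LB_limit[OF LBi[OF Lc Ls0 rc rs] lim] False by simp
        have l2: "l \<le> Lc * (1 - rc) + 1" using LB_limit[OF LBiv[OF Lc Ls0 rc rs] lim] rc1 by simp
        have l3: "l \<le> rs + Ls * (1 - rs)" using LB_limit[OF LBviii[OF Lc Ls0 rc rsp] lim] rs1 by simp
        show ?thesis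
        proof (rule ccontr)
          assume "\<not> l \<le> D"
          then have h1: "D < rs + rc" and h2: "D - 1 < Lc * (1 - rc)" and h3: "D - 1 < (Ls - 1) * (1 - rs)"
            using l1 l2 l3 by (auto simp: algebra_simps)
          have m2: "(Ls - 1) * (D - 1) < (Ls - 1) * (Lc * (1 - rc))" using h2 Ls by simp
          have m3: "Lc * (D - 1) < Lc * ((Ls - 1) * (1 - rs))" using h3 Lc by simp
          have m1: "Lc * (Ls - 1) * ((1 - rc) + (1 - rs)) < Lc * (Ls - 1) * (2 - D)"
            using h1 Lc Ls by (intro mult_strict_left_mono) auto
          have iden: "(Ls - 1 + Lc) * (D - 1) = Lc * (Ls - 1) * (2 - D)"
            unfolding Deq by (rule A(8))
          show False using m1 m2 m3 iden by (simp add: algebra_simps)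
        qed
      qed
    qed
  qed
qed



theorem lemma8:
  fixes Lc Ls :: real
  assumes "Lc > 0" and "Ls > 0"
  shows "Delta_s Ls Lc =
    (if Ls \<le> 1 then 1 - (1 - Ls)\<^sup>2 / (Lc + 1 - Ls)
     else (Ls * (2 * Lc + 1) - Lc - 1) / (Ls * (Lc + 1) - 1))"
proof -
  have S: "{l. \<exists>rc rs. rc > 0 \<and> rs \<ge> 0 \<and>
      ((\<lambda>\<rho>. - ln (ED_s Lc Ls \<rho> (rs / 2 * log 2 \<rho>) (rc / 2 * log 2 \<rho>)) / ln \<rho>) \<longlongrightarrow> l) at_top}
     = {l. \<exists>rc rs. rc > 0 \<and> rs \<ge> 0 \<and> (fexp Lc Ls rs rc \<longlongrightarrow> l) at_top}"
    by (simp only: fexp_eq)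
  show ?thesis
  proof (cases "Ls \<le> 1")
    case True
    have "Delta_s Ls Lc = DA Lc Ls"
      unfolding Delta_s_def S
      by (rule cSup_eq_maximum) (use caseA[OF assms(1,2) True] in blast)+
    then show ?thesis using True unfolding DA_def by simp
  next
    case False
    then have Ls1: "Ls > 1" by simp
    have "Delta_s Ls Lc = DB Lc Ls"
      unfolding Delta_s_def S
      by (rule cSup_eq_maximum) (use caseB[OF assms(1) Ls1] in blast)+
    then show ?thesis using False unfolding DB_def by simp
  qed
qed

end
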